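(* Let $(G,u,v,\alpha,\beta)$ be a Guvab. The sequence $W(\mu_k,\nu_k)$ does not converge as $k\to\infty$ if and only if $G$ is bipartite, $\alpha=0$, $\beta=1$, and $$\sum_{w\in V(G)}(-1)^{d(v,w)}\,d(v,w)\,\deg(w)\ne0.$$
   Context: A Guvab is a tuple $(G,u,v,\alpha,\beta)$ where $G$ is a finite, connected, simple graph, $u,v\in V(G)$, and $\alpha,\beta\in[0,1]$ with $\alpha\le\beta$. A random walk on $G$ with starting vertex $w$ and laziness $\gamma$ is the Markov chain $R_0=w$ and, for $i\ge1$, $R_i=R_{i-1}$ with probability $\gamma$ and $R_i=t$ with probability $\frac{1-\gamma}{\deg(R_{i-1})}$ for each neighbor $t$ of $R_{i-1}$. $\mu_k$ is the distribution after $k$ steps of the walk from $u$ with laziness $\alpha$, and $\nu_k$ that of the walk from $v$ with laziness $\beta$. $W(\mu,\nu)$ is the Wasserstein ($L^1$ optimal transport) distance with respect to the graph distance $d$: the minimum over transportation plans (nonnegative $T$ on $V(G)\times V(G)$ with marginals $\mu,\nu$) of $\sum d(w_1,w_2)T(w_1,w_2)$. *)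

theory Defs
  imports "HOL-Analysis.Analysis"
begin

definition simple_graph :: "'a set \<Rightarrow> ('a \<Rightarrow> 'a \<Rightarrow> bool) \<Rightarrow> bool" where
  "simple_graph V E \<longleftrightarrow> finite V \<and> V \<noteq> {} \<and>
     (\<forall>x y. E x y \<longrightarrow> x \<in> V \<and> y \<in> V) \<and>
     (\<forall>x y. E x y \<longrightarrow> E y x) \<and> (\<forall>x. \<not> E x x)"

definition adj_rel :: "('a \<Rightarrow> 'a \<Rightarrow> bool) \<Rightarrow> ('a \<times> 'a) set" where
  "adj_rel E = {(x, y). E x y}"

definition connected_graph :: "'a set \<Rightarrow> ('a \<Rightarrow> 'a \<Rightarrow> bool) \<Rightarrow> bool" where
  "connected_graph V E \<longleftrightarrow> simple_graph V E \<and> (\<forall>x\<in>V. \<forall>y\<in>V. (x, y) \<in> (adj_rel E)\<^sup>*)"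

definition gdist :: "('a \<Rightarrow> 'a \<Rightarrow> bool) \<Rightarrow> 'a \<Rightarrow> 'a \<Rightarrow> nat" where
  "gdist E x y = (LEAST n. (x, y) \<in> (adj_rel E) ^^ n)"

definition deg :: "'a set \<Rightarrow> ('a \<Rightarrow> 'a \<Rightarrow> bool) \<Rightarrow> 'a \<Rightarrow> nat" where
  "deg V E w = card {t \<in> V. E w t}"

definition bipartite :: "'a set \<Rightarrow> ('a \<Rightarrow> 'a \<Rightarrow> bool) \<Rightarrow> bool" where
  "bipartite V E \<longleftrightarrow> (\<exists>c :: 'a \<Rightarrow> bool. \<forall>x\<in>V. \<forall>y\<in>V. E x y \<longrightarrow> c x \<noteq> c y)"

text \<open>One-step transition probability of the lazy random walk with laziness g.
  (An isolated vertex, which only occurs for the one-vertex graph, stays put.)\<close>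
definition trans_prob :: "'a set \<Rightarrow> ('a \<Rightarrow> 'a \<Rightarrow> bool) \<Rightarrow> real \<Rightarrow> 'a \<Rightarrow> 'a \<Rightarrow> real" where
  "trans_prob V E g s t =
     (if deg V E s = 0 then (if s = t then 1 else 0)
      else if s = t then g
      else if E s t then (1 - g) / real (deg V E s) else 0)"

fun walk_dist :: "'a set \<Rightarrow> ('a \<Rightarrow> 'a \<Rightarrow> bool) \<Rightarrow> real \<Rightarrow> 'a \<Rightarrow> nat \<Rightarrow> 'a \<Rightarrow> real" where
  "walk_dist V E g w 0 = (\<lambda>t. if t = w then 1 else 0)"
| "walk_dist V E g w (Suc k) =
     (\<lambda>t. \<Sum>s\<in>V. walk_dist V E g w k s * trans_prob V E g s t)"

definition transport_plan ::
  "'a set \<Rightarrow> ('a \<Rightarrow> real) \<Rightarrow> ('a \<Rightarrow> real) \<Rightarrow> ('a \<Rightarrow> 'a \<Rightarrow> real) \<Rightarrow> bool" where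
  "transport_plan V \<mu> \<nu> T \<longleftrightarrow>
     (\<forall>x\<in>V. \<forall>y\<in>V. T x y \<ge> 0) \<and>
     (\<forall>x\<in>V. (\<Sum>y\<in>V. T x y) = \<mu> x) \<and>
     (\<forall>y\<in>V. (\<Sum>x\<in>V. T x y) = \<nu> y)"

definition wasserstein ::
  "'a set \<Rightarrow> ('a \<Rightarrow> 'a \<Rightarrow> bool) \<Rightarrow> ('a \<Rightarrow> real) \<Rightarrow> ('a \<Rightarrow> real) \<Rightarrow> real" where
  "wasserstein V E \<mu> \<nu> =
     Inf {(\<Sum>x\<in>V. \<Sum>y\<in>V. real (gdist E x y) * T x y) | T. transport_plan V \<mu> \<nu> T}"

end

theory Submission
  imports Defs
begin


locale cgraph =
  fixes V :: "'a set" and E :: "'a \<Rightarrow> 'a \<Rightarrow> bool"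
  assumes conn: "connected_graph V E"
begin

abbreviation "R \<equiv> adj_rel E"
abbreviation "d \<equiv> gdist E"

lemma fin: "finite V" and Vne: "V \<noteq> {}" and EV: "E x y \<Longrightarrow> x \<in> V \<and> y \<in> V"
  and Esym: "E x y \<Longrightarrow> E y x" and Eirr: "\<not> E x x"
  using conn unfolding connected_graph_def simple_graph_def by blast+

lemma R_iff[simp]: "(x, y) \<in> R \<longleftrightarrow> E x y"
  by (simp add: adj_rel_def)

lemma walk_V: "(x, y) \<in> R ^^ n \<Longrightarrow> x \<in> V \<Longrightarrow> y \<in> V"
proof (induction n arbitrary: y)
  case 0 then show ?case by auto
next
  case (Suc n) then show ?case
    by (metis R_iff EV relpow_Suc_E)
qed

lemma walk_rev: "(x, y) \<in> R ^^ n \<Longrightarrow> (y, x) \<in> R ^^ n"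
proof (induction n arbitrary: y)
  case 0 then show ?case by auto
next
  case (Suc n)
  then obtain z where "(x, z) \<in> R ^^ n" "E z y" by (auto elim: relpow_Suc_E)
  then show ?case using Suc.IH Esym by (meson R_iff relpow_Suc_I2)
qed

lemma walk_ex: "x \<in> V \<Longrightarrow> y \<in> V \<Longrightarrow> \<exists>n. (x, y) \<in> R ^^ n"
  using conn unfolding connected_graph_def by (meson rtrancl_power)

lemma d_walk: "x \<in> V \<Longrightarrow> y \<in> V \<Longrightarrow> (x, y) \<in> R ^^ d x y"
  unfolding gdist_def using walk_ex by (metis LeastI_ex)

lemma d_le: "(x, y) \<in> R ^^ n \<Longrightarrow> d x y \<le> n"
  unfolding gdist_def by (rule Least_le)

lemma d_self[simp]: "d x x = 0"
  using d_le[of x x 0] by auto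

lemma d_sym: "x \<in> V \<Longrightarrow> y \<in> V \<Longrightarrow> d x y = d y x"
  by (meson antisym d_le d_walk walk_rev)

lemma d_tri: "x \<in> V \<Longrightarrow> y \<in> V \<Longrightarrow> z \<in> V \<Longrightarrow> d x z \<le> d x y + d y z"
  by (meson d_le d_walk relpow_trans)

lemma d_edge: "E x y \<Longrightarrow> d x y \<le> 1"
  using d_le[of x y 1] by simp

lemma d_zero: "x \<in> V \<Longrightarrow> y \<in> V \<Longrightarrow> d x y = 0 \<Longrightarrow> x = y"
  using d_walk[of x y] by auto

definition Dsum :: nat where "Dsum = (\<Sum>x\<in>V. \<Sum>y\<in>V. d x y)"

lemma d_le_Dsum: "x \<in> V \<Longrightarrow> y \<in> V \<Longrightarrow> d x y \<le> Dsum"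
proof -
  assume a: "x \<in> V" "y \<in> V"
  have "d x y \<le> (\<Sum>y\<in>V. d x y)" using a fin by (intro member_le_sum) auto
  also have "\<dots> \<le> Dsum" unfolding Dsum_def using a fin
    by (intro member_le_sum[where f = "\<lambda>x. \<Sum>y\<in>V. d x y"]) auto
  finally show ?thesis .
qed

lemma parity:
  assumes c: "\<forall>x\<in>V. \<forall>y\<in>V. E x y \<longrightarrow> c x \<noteq> c y"
  shows "(x, y) \<in> R ^^ n \<Longrightarrow> x \<in> V \<Longrightarrow> (c x = (c y :: bool) \<longleftrightarrow> even n)"
proof (induction n arbitrary: y)
  case 0 then show ?case by auto
next
  case (Suc n)
  then obtain z where z: "(x, z) \<in> R ^^ n" "E z y" by (auto elim: relpow_Suc_E)
  then have "c z \<noteq> c y" using c EV by blast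
  with Suc.IH[OF z(1) Suc.prems(2)] show ?case by auto
qed

lemma parity_d:
  assumes c: "\<forall>x\<in>V. \<forall>y\<in>V. E x y \<longrightarrow> c x \<noteq> c y" and "x \<in> V" "y \<in> V"
  shows "c x = (c y :: bool) \<longleftrightarrow> even (d x y)"
  using parity[OF c d_walk[OF assms(2,3)] assms(2)] .

lemma pad: "(x, y) \<in> R ^^ n \<Longrightarrow> E y z \<Longrightarrow> (x, y) \<in> R ^^ (n + 2 * j)"
proof (induction j)
  case 0 then show ?case by simp
next
  case (Suc j)
  have "(y, z) \<in> R ^^ 1" "(z, y) \<in> R ^^ 1" using Suc.prems(2) Esym by auto
  then have "(y, y) \<in> R ^^ (1 + 1)" by (rule relpow_trans)
  then have "(x, y) \<in> R ^^ (n + 2 * j + 2)" using Suc.IH Suc.prems relpow_trans by fastforce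
  then show ?case by (simp add: algebra_simps)
qed

end



context cgraph
begin

definition cost :: "('a \<Rightarrow> 'a \<Rightarrow> real) \<Rightarrow> real" where
  "cost T = (\<Sum>x\<in>V. \<Sum>y\<in>V. real (d x y) * T x y)"

abbreviation "plan \<equiv> transport_plan V"
abbreviation "W \<equiv> wasserstein V E"

lemma W_eq: "W \<mu> \<nu> = Inf (cost ` {T. plan \<mu> \<nu> T})"
  unfolding wasserstein_def cost_def by (rule arg_cong[where f=Inf]) blast

lemma cost_nonneg: "plan \<mu> \<nu> T \<Longrightarrow> 0 \<le> cost T"
  unfolding cost_def transport_plan_def by (auto intro!: sum_nonneg)

lemma W_le: "plan \<mu> \<nu> T \<Longrightarrow> W \<mu> \<nu> \<le> cost T"
  unfolding W_eq by (rule cInf_lower) (auto intro!: bdd_belowI[of _ 0] cost_nonneg)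

lemma W_ge: "plan \<mu> \<nu> T0 \<Longrightarrow> (\<And>T. plan \<mu> \<nu> T \<Longrightarrow> c \<le> cost T) \<Longrightarrow> c \<le> W \<mu> \<nu>"
  unfolding W_eq by (rule cInf_greatest) auto

lemma W_nonneg: "plan \<mu> \<nu> T0 \<Longrightarrow> 0 \<le> W \<mu> \<nu>"
  using W_ge cost_nonneg by blast

lemma plan_cong: "(\<And>x. x \<in> V \<Longrightarrow> \<mu> x = \<mu>' x) \<Longrightarrow> (\<And>x. x \<in> V \<Longrightarrow> \<nu> x = \<nu>' x) \<Longrightarrow>
   plan \<mu> \<nu> T = plan \<mu>' \<nu>' T"
  unfolding transport_plan_def by auto

lemma W_cong: assumes "\<And>x. x \<in> V \<Longrightarrow> \<mu> x = \<mu>' x" "\<And>x. x \<in> V \<Longrightarrow> \<nu> x = \<nu>' x"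
  shows "W \<mu> \<nu> = W \<mu>' \<nu>'"
proof -
  have "Collect (plan \<mu> \<nu>) = Collect (plan \<mu>' \<nu>')" using plan_cong[of \<mu> \<mu>' \<nu> \<nu>'] assms by auto
  then show ?thesis unfolding W_eq by simp
qed

lemma plan_ex:
  assumes "\<forall>x\<in>V. \<mu> x \<ge> 0" "\<forall>x\<in>V. \<nu> x \<ge> 0" "sum \<mu> V = sum \<nu> V"
  shows "\<exists>T. plan \<mu> \<nu> T"
proof (cases "sum \<nu> V = 0")
  case True
  then have "\<forall>x\<in>V. \<nu> x = 0" "\<forall>x\<in>V. \<mu> x = 0"
    using assms fin sum_nonneg_eq_0_iff by metis+
  then have "plan \<mu> \<nu> (\<lambda>x y. 0)" unfolding transport_plan_def by auto
  then show ?thesis by blast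
next
  case False
  let ?T = "\<lambda>x y. \<mu> x * \<nu> y / sum \<nu> V"
  have "plan \<mu> \<nu> ?T" unfolding transport_plan_def
  proof (intro conjI ballI)
    fix x y assume "x \<in> V" "y \<in> V" then show "0 \<le> ?T x y"
      using assms sum_nonneg[of V \<nu>] by auto
  next
    fix x assume "x \<in> V" then show "(\<Sum>y\<in>V. ?T x y) = \<mu> x"
      using False by (simp add: sum_divide_distrib[symmetric] sum_distrib_left[symmetric])
  next
    fix y assume "y \<in> V" then show "(\<Sum>x\<in>V. ?T x y) = \<nu> y"
      using False assms(3) by (simp add: sum_divide_distrib[symmetric] sum_distrib_right[symmetric])
  qed
  then show ?thesis by blast
qed

lemma W_sym: "W \<mu> \<nu> = W \<nu> \<mu>"
proof -
  have "cost ` {T. plan \<mu> \<nu> T} = cost ` {T. plan \<nu> \<mu> T}"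
  proof -
    have tr: "plan a b T \<Longrightarrow> plan b a (\<lambda>x y. T y x)" for a b T
      unfolding transport_plan_def by auto
    have ct: "cost (\<lambda>x y. T y x) = cost T" for T
      unfolding cost_def by (subst sum.swap) (auto intro!: sum.cong simp: d_sym)
    show ?thesis
    proof (intro equalityI subsetI)
      fix c assume "c \<in> cost ` {T. plan \<mu> \<nu> T}"
      then obtain T where "plan \<mu> \<nu> T" "c = cost T" by auto
      then show "c \<in> cost ` {T. plan \<nu> \<mu> T}" using tr ct by (metis image_eqI mem_Collect_eq)
    next
      fix c assume "c \<in> cost ` {T. plan \<nu> \<mu> T}"
      then obtain T where "plan \<nu> \<mu> T" "c = cost T" by auto
      then show "c \<in> cost ` {T. plan \<mu> \<nu> T}" using tr ct by (metis image_eqI mem_Collect_eq)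
    qed
  qed
  then show ?thesis unfolding W_eq by simp
qed

lemma W_self: assumes "\<forall>x\<in>V. \<mu> x \<ge> 0" shows "W \<mu> \<mu> = 0"
proof -
  let ?T = "\<lambda>x y. if x = y then \<mu> x else 0"
  have p: "plan \<mu> \<mu> ?T" unfolding transport_plan_def using assms fin
    by (auto simp: sum.delta sum.delta')
  have "cost ?T = 0" unfolding cost_def by (auto intro!: sum.neutral)
  then show ?thesis using W_le[OF p] W_nonneg[OF p] by linarith
qed

lemma W_delta:
  assumes "\<forall>x\<in>V. \<mu> x \<ge> 0" "sum \<mu> V = 1" "v \<in> V"
  shows "W \<mu> (\<lambda>t. if t = v then 1 else 0) = (\<Sum>x\<in>V. \<mu> x * real (d x v))"
    (is "W \<mu> ?nu = ?S")
proof -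
  let ?T = "\<lambda>x y. if y = v then \<mu> x else 0"
  have p: "plan \<mu> ?nu ?T" unfolding transport_plan_def using assms fin
    by (auto simp: sum.delta sum.delta')
  have e: "real (d x y) * ?T x y = (if y = v then \<mu> x * real (d x v) else 0)" for x y by simp
  have c: "cost ?T = ?S" unfolding cost_def e using assms(3) fin by simp
  have "cost T = ?S" if pT: "plan \<mu> ?nu T" for T
  proof -
    have z: "T x y = 0" if "x \<in> V" "y \<in> V" "y \<noteq> v" for x y
    proof -
      have "(\<Sum>x\<in>V. T x y) = 0" using pT that unfolding transport_plan_def by auto
      then show ?thesis using pT that fin sum_nonneg_eq_0_iff[of V "\<lambda>x. T x y"]
        unfolding transport_plan_def by auto
    qed
    have r: "T x v = \<mu> x" if "x \<in> V" for x
    proof -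
      have "\<mu> x = (\<Sum>y\<in>V. T x y)" using pT that unfolding transport_plan_def by auto
      also have "\<dots> = (\<Sum>y\<in>V. if y = v then T x v else 0)"
        using z that by (intro sum.cong) auto
      also have "\<dots> = T x v" using assms(3) fin by simp
      finally show ?thesis by simp
    qed
    have "cost T = (\<Sum>x\<in>V. \<Sum>y\<in>V. real (d x y) * ?T x y)" unfolding cost_def
      using z r by (intro sum.cong) auto
    then show ?thesis using c unfolding cost_def by simp
  qed
  then have "?S \<le> W \<mu> ?nu" using W_ge[OF p] by simp
  with W_le[OF p] c show ?thesis by linarith
qed

end


context cgraph
begin

lemma ind_sum: "x \<in> V \<Longrightarrow> (\<Sum>y\<in>V. if y = x then (c::real) else 0) = c"
  using fin by simp

lemma cancel_one:
  assumes xV: "x \<in> V" and c0: "c \<ge> 0" and mu: "\<forall>y\<in>V. \<mu> y \<ge> 0" and nu: "\<forall>y\<in>V. \<nu> y \<ge> 0"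
    and pT: "plan (\<lambda>y. \<mu> y + (if y = x then c else 0)) (\<lambda>y. \<nu> y + (if y = x then c else 0)) T"
  shows "\<exists>S. plan \<mu> \<nu> S \<and> cost S \<le> cost T"
proof -
  define a where "a = T x x"
  have Tnn: "\<And>z y. z \<in> V \<Longrightarrow> y \<in> V \<Longrightarrow> T z y \<ge> 0" using pT unfolding transport_plan_def by auto
  have rowT: "\<And>z. z \<in> V \<Longrightarrow> (\<Sum>y\<in>V. T z y) = \<mu> z + (if z = x then c else 0)"
    using pT unfolding transport_plan_def by auto
  have colT: "\<And>y. y \<in> V \<Longrightarrow> (\<Sum>z\<in>V. T z y) = \<nu> y + (if y = x then c else 0)"
    using pT unfolding transport_plan_def by auto
  show ?thesis
  proof (cases "c \<le> a")
    case True
    define S where "S = (\<lambda>z y. T z y - (if z = x \<and> y = x then c else 0))"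
    have "plan \<mu> \<nu> S" unfolding transport_plan_def
    proof (intro conjI ballI)
      fix z y assume "z \<in> V" "y \<in> V" then show "0 \<le> S z y"
        using Tnn True unfolding S_def a_def by auto
    next
      fix z assume z: "z \<in> V"
      have "(\<Sum>y\<in>V. S z y) = (\<Sum>y\<in>V. T z y) - (\<Sum>y\<in>V. if z = x \<and> y = x then c else 0)"
        unfolding S_def by (simp add: sum_subtractf)
      also have "(\<Sum>y\<in>V. if z = x \<and> y = x then c else 0) = (if z = x then c else 0)"
        using xV fin by auto
      finally show "(\<Sum>y\<in>V. S z y) = \<mu> z" using rowT[OF z] by simp
    next
      fix y assume y: "y \<in> V"
      have "(\<Sum>z\<in>V. S z y) = (\<Sum>z\<in>V. T z y) - (\<Sum>z\<in>V. if z = x \<and> y = x then c else 0)"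
        unfolding S_def by (simp add: sum_subtractf)
      also have "(\<Sum>z\<in>V. if z = x \<and> y = x then c else 0) = (if y = x then c else 0)"
        using xV fin by auto
      finally show "(\<Sum>z\<in>V. S z y) = \<nu> y" using colT[OF y] by simp
    qed
    moreover have "cost S = cost T"
    proof -
      have "real (d z y) * S z y = real (d z y) * T z y" for z y
        unfolding S_def by auto
      then show ?thesis unfolding cost_def by (intro sum.cong) auto
    qed
    ultimately show ?thesis by auto
  next
    case False
    define e where "e = c - a"
    have e0: "e > 0" using False e_def by simp
    define r where "r = (\<lambda>y. if y = x then 0 else T x y)"
    define s where "s = (\<lambda>z. if z = x then 0 else T z x)"
    define R where "R = sum r V"
    define Sc where "Sc = sum s V"
    have rT: "r y = T x y - (if y = x then a else 0)" for y unfolding r_def a_def by simp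
    have sT: "s z = T z x - (if z = x then a else 0)" for z unfolding s_def a_def by simp
    have R: "R = \<mu> x + e" unfolding R_def rT sum_subtractf using rowT[OF xV] xV fin
      by (simp add: e_def)
    have Sc: "Sc = \<nu> x + e" unfolding Sc_def sT sum_subtractf using colT[OF xV] xV fin
      by (simp add: e_def)
    have eR: "e \<le> R" and eS: "e \<le> Sc" using R Sc mu nu xV by auto
    have R0: "R > 0" and S0: "Sc > 0" using eR eS e0 by auto
    have rnn: "y \<in> V \<Longrightarrow> r y \<ge> 0" for y unfolding r_def using Tnn xV by auto
    have snn: "z \<in> V \<Longrightarrow> s z \<ge> 0" for z unfolding s_def using Tnn xV by auto
    define S where "S = (\<lambda>z y. T z y - (if z = x \<and> y = x then a else 0)
       - (if z = x then r y * e / R else 0) - (if y = x then s z * e / Sc else 0)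
       + s z * r y * e / (R * Sc))"
    have "plan \<mu> \<nu> S" unfolding transport_plan_def
    proof (intro conjI ballI)
      fix z y assume zy: "z \<in> V" "y \<in> V"
      show "0 \<le> S z y"
      proof (cases "z = x")
        case True
        then show ?thesis
        proof (cases "y = x")
          case True
          then show ?thesis using \<open>z = x\<close> unfolding S_def r_def s_def a_def by simp
        next
          case False
          have "T x y * e / R \<le> T x y" using Tnn[OF xV zy(2)] eR R0
            by (simp add: divide_le_eq mult_left_mono)
          then show ?thesis using \<open>z = x\<close> False unfolding S_def r_def s_def by simp
        qed
      next
        case False
        then show ?thesis
        proof (cases "y = x")
          case True
          have "T z x * e / Sc \<le> T z x" using Tnn[OF zy(1) xV] eS S0
            by (simp add: divide_le_eq mult_left_mono)
          then show ?thesis using \<open>z \<noteq> x\<close> True unfolding S_def r_def s_def by simp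
        next
          case False
          have "0 \<le> s z * r y * e / (R * Sc)" using snn[OF zy(1)] rnn[OF zy(2)] e0 R0 S0 by simp
          then show ?thesis using \<open>z \<noteq> x\<close> False Tnn[OF zy] unfolding S_def by simp
        qed
      qed
    next
      fix z assume z: "z \<in> V"
      have "(\<Sum>y\<in>V. S z y) = (\<Sum>y\<in>V. T z y) - (\<Sum>y\<in>V. if z = x \<and> y = x then a else 0)
        - (\<Sum>y\<in>V. if z = x then r y * e / R else 0) - (\<Sum>y\<in>V. if y = x then s z * e / Sc else 0)
        + (\<Sum>y\<in>V. s z * r y * e / (R * Sc))"
        unfolding S_def by (simp add: sum.distrib sum_subtractf)
      also have "(\<Sum>y\<in>V. if z = x \<and> y = x then a else 0) = (if z = x then a else 0)"
        using xV fin by auto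
      also have "(\<Sum>y\<in>V. if z = x then r y * e / R else 0) = (if z = x then e else 0)"
        using R0 by (simp add: sum_divide_distrib[symmetric] sum_distrib_right[symmetric] R_def[symmetric])
      also have "(\<Sum>y\<in>V. if y = x then s z * e / Sc else 0) = s z * e / Sc"
        using xV fin by simp
      also have "(\<Sum>y\<in>V. s z * r y * e / (R * Sc)) = s z * e / Sc"
      proof -
        have "(\<Sum>y\<in>V. s z * r y * e / (R * Sc)) = s z * e / (R * Sc) * R"
          unfolding R_def by (simp add: sum_distrib_left sum_divide_distrib algebra_simps)
        then show ?thesis using R0 by simp
      qed
      finally show "(\<Sum>y\<in>V. S z y) = \<mu> z" using rowT[OF z] by (simp add: e_def)
    next
      fix y assume y: "y \<in> V"
      have "(\<Sum>z\<in>V. S z y) = (\<Sum>z\<in>V. T z y) - (\<Sum>z\<in>V. if z = x \<and> y = x then a else 0)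
        - (\<Sum>z\<in>V. if z = x then r y * e / R else 0) - (\<Sum>z\<in>V. if y = x then s z * e / Sc else 0)
        + (\<Sum>z\<in>V. s z * r y * e / (R * Sc))"
        unfolding S_def by (simp add: sum.distrib sum_subtractf)
      also have "(\<Sum>z\<in>V. if z = x \<and> y = x then a else 0) = (if y = x then a else 0)"
        using xV fin by auto
      also have "(\<Sum>z\<in>V. if y = x then s z * e / Sc else 0) = (if y = x then e else 0)"
        using S0 by (simp add: sum_divide_distrib[symmetric] sum_distrib_right[symmetric] Sc_def[symmetric])
      also have "(\<Sum>z\<in>V. if z = x then r y * e / R else 0) = r y * e / R"
        using xV fin by simp
      also have "(\<Sum>z\<in>V. s z * r y * e / (R * Sc)) = r y * e / R"
      proof -
        have "(\<Sum>z\<in>V. s z * r y * e / (R * Sc)) = r y * e / (R * Sc) * Sc"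
          unfolding Sc_def by (simp add: sum_distrib_left sum_divide_distrib algebra_simps)
        then show ?thesis using S0 by simp
      qed
      finally show "(\<Sum>z\<in>V. S z y) = \<nu> y" using colT[OF y] by (simp add: e_def)
    qed
    moreover have "cost S \<le> cost T"
    proof -
      define A2 where "A2 = (\<Sum>y\<in>V. real (d x y) * r y)"
      define A3 where "A3 = (\<Sum>z\<in>V. real (d z x) * s z)"
      define A4 where "A4 = (\<Sum>z\<in>V. \<Sum>y\<in>V. real (d z y) * (s z * r y))"
      have split: "real (d z y) * S z y = real (d z y) * T z y
          - real (d z y) * (if z = x \<and> y = x then a else 0)
          - (if z = x then real (d x y) * r y * (e / R) else 0)
          - (if y = x then real (d z x) * s z * (e / Sc) else 0)
          + real (d z y) * (s z * r y) * (e / (R * Sc))" for z y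
        unfolding S_def by (auto simp: algebra_simps)
      have c1: "(\<Sum>z\<in>V. \<Sum>y\<in>V. real (d z y) * (if z = x \<and> y = x then a else 0)) = 0"
        by (intro sum.neutral ballI) auto
      have c2: "(\<Sum>z\<in>V. \<Sum>y\<in>V. (if z = x then real (d x y) * r y * (e / R) else 0)) = A2 * (e / R)"
      proof -
        have "(\<Sum>z\<in>V. \<Sum>y\<in>V. (if z = x then real (d x y) * r y * (e / R) else 0))
          = (\<Sum>z\<in>V. if z = x then (\<Sum>y\<in>V. real (d x y) * r y * (e / R)) else 0)"
          by (intro sum.cong) auto
        also have "\<dots> = (\<Sum>y\<in>V. real (d x y) * r y * (e / R))" using xV fin by simp
        finally show ?thesis unfolding A2_def by (simp add: sum_distrib_right sum_divide_distrib)
      qed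
      have c3: "(\<Sum>z\<in>V. \<Sum>y\<in>V. (if y = x then real (d z x) * s z * (e / Sc) else 0)) = A3 * (e / Sc)"
        using xV fin unfolding A3_def by (simp add: sum_distrib_right sum_divide_distrib)
      have c4: "(\<Sum>z\<in>V. \<Sum>y\<in>V. real (d z y) * (s z * r y) * (e / (R * Sc))) = A4 * (e / (R * Sc))"
        unfolding A4_def by (simp add: sum_distrib_right sum_divide_distrib)
      have cS: "cost S = cost T - 0 - A2 * (e / R) - A3 * (e / Sc) + A4 * (e / (R * Sc))"
        unfolding cost_def split
        by (simp only: sum.distrib sum_subtractf c1 c2 c3 c4)
      have A4le: "A4 \<le> A3 * R + Sc * A2"
      proof -
        have "A4 \<le> (\<Sum>z\<in>V. \<Sum>y\<in>V. (real (d z x) + real (d x y)) * (s z * r y))"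
          unfolding A4_def
        proof (intro sum_mono)
          fix z y assume "z \<in> V" "y \<in> V"
          then show "real (d z y) * (s z * r y) \<le> (real (d z x) + real (d x y)) * (s z * r y)"
            using d_tri[of z x y] xV snn rnn by (intro mult_right_mono) auto
        qed
        also have "\<dots> = (\<Sum>z\<in>V. real (d z x) * s z * R + s z * A2)"
        proof (intro sum.cong refl)
          fix z
          have "(\<Sum>y\<in>V. (real (d z x) + real (d x y)) * (s z * r y))
              = (\<Sum>y\<in>V. (real (d z x) * s z) * r y) + (\<Sum>y\<in>V. s z * (real (d x y) * r y))"
            by (simp add: sum.distrib[symmetric] algebra_simps)
          also have "\<dots> = real (d z x) * s z * R + s z * A2"
            unfolding R_def A2_def by (simp add: sum_distrib_left)
          finally show "(\<Sum>y\<in>V. (real (d z x) + real (d x y)) * (s z * r y)) = real (d z x) * s z * R + s z * A2" .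
        qed
        also have "\<dots> = A3 * R + Sc * A2"
          unfolding A3_def Sc_def by (simp add: sum.distrib sum_distrib_right)
        finally show ?thesis .
      qed
      have "A4 * (e / (R * Sc)) \<le> (A3 * R + Sc * A2) * (e / (R * Sc))"
        using A4le e0 R0 S0 by (intro mult_right_mono) auto
      also have "\<dots> = A2 * (e / R) + A3 * (e / Sc)" using R0 S0 by (simp add: field_simps)
      finally show ?thesis using cS by simp
    qed
    ultimately show ?thesis by auto
  qed
qed

end


context cgraph
begin

lemma cancel_F:
  assumes "finite F" "F \<subseteq> V"
  shows "\<forall>\<mu> \<nu> T. (\<forall>y\<in>V. \<rho> y \<ge> 0) \<longrightarrow> (\<forall>y\<in>V. \<mu> y \<ge> 0) \<longrightarrow> (\<forall>y\<in>V. \<nu> y \<ge> 0) \<longrightarrow>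
     plan (\<lambda>y. \<mu> y + (if y \<in> F then \<rho> y else 0)) (\<lambda>y. \<nu> y + (if y \<in> F then \<rho> y else 0)) T \<longrightarrow>
     (\<exists>S. plan \<mu> \<nu> S \<and> cost S \<le> cost T)"
  using assms
proof (induction F rule: finite_induct)
  case empty
  then show ?case by auto
next
  case (insert x F)
  show ?case
  proof (intro allI impI)
    fix \<mu> \<nu> T
    assume rho: "\<forall>y\<in>V. \<rho> y \<ge> 0" and mu: "\<forall>y\<in>V. \<mu> y \<ge> 0" and nu: "\<forall>y\<in>V. \<nu> y \<ge> 0"
      and p: "plan (\<lambda>y. \<mu> y + (if y \<in> insert x F then \<rho> y else 0)) (\<lambda>y. \<nu> y + (if y \<in> insert x F then \<rho> y else 0)) T"
    define \<mu>' where "\<mu>' = (\<lambda>y. \<mu> y + (if y \<in> F then \<rho> y else 0))"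
    define \<nu>' where "\<nu>' = (\<lambda>y. \<nu> y + (if y \<in> F then \<rho> y else 0))"
    have xV: "x \<in> V" using insert by auto
    have p': "plan (\<lambda>y. \<mu>' y + (if y = x then \<rho> x else 0)) (\<lambda>y. \<nu>' y + (if y = x then \<rho> x else 0)) T"
      using p insert(2) unfolding \<mu>'_def \<nu>'_def by (subst plan_cong) auto
    have "\<forall>y\<in>V. \<mu>' y \<ge> 0" "\<forall>y\<in>V. \<nu>' y \<ge> 0" using rho mu nu unfolding \<mu>'_def \<nu>'_def by auto
    from cancel_one[OF xV _ this p'] rho xV obtain S where S: "plan \<mu>' \<nu>' S" "cost S \<le> cost T" by auto
    have IH: "\<forall>\<mu> \<nu> T. (\<forall>y\<in>V. \<rho> y \<ge> 0) \<longrightarrow> (\<forall>y\<in>V. \<mu> y \<ge> 0) \<longrightarrow> (\<forall>y\<in>V. \<nu> y \<ge> 0) \<longrightarrow>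
     plan (\<lambda>y. \<mu> y + (if y \<in> F then \<rho> y else 0)) (\<lambda>y. \<nu> y + (if y \<in> F then \<rho> y else 0)) T \<longrightarrow>
     (\<exists>S. plan \<mu> \<nu> S \<and> cost S \<le> cost T)" using insert.IH insert(4) by auto
    from IH[rule_format, OF rho[rule_format] mu[rule_format] nu[rule_format] S(1)[unfolded \<mu>'_def \<nu>'_def]]
    obtain S' where "plan \<mu> \<nu> S'" "cost S' \<le> cost S" by auto
    then show "\<exists>S. plan \<mu> \<nu> S \<and> cost S \<le> cost T" using S(2) by auto
  qed
qed

lemma cancel:
  assumes "\<forall>y\<in>V. \<rho> y \<ge> 0" "\<forall>y\<in>V. \<mu> y \<ge> 0" "\<forall>y\<in>V. \<nu> y \<ge> 0"
    and "plan (\<lambda>y. \<mu> y + \<rho> y) (\<lambda>y. \<nu> y + \<rho> y) T"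
  shows "\<exists>S. plan \<mu> \<nu> S \<and> cost S \<le> cost T"
proof -
  have "plan (\<lambda>y. \<mu> y + (if y \<in> V then \<rho> y else 0)) (\<lambda>y. \<nu> y + (if y \<in> V then \<rho> y else 0)) T"
    using assms(4) by (subst plan_cong) auto
  then show ?thesis using cancel_F[OF fin order_refl] assms(1-3) by blast
qed

lemma W_cancel:
  assumes rho: "\<forall>y\<in>V. \<rho> y \<ge> 0" and mu: "\<forall>y\<in>V. \<mu> y \<ge> 0" and nu: "\<forall>y\<in>V. \<nu> y \<ge> 0"
    and s: "sum \<mu> V = sum \<nu> V"
  shows "W (\<lambda>y. \<mu> y + \<rho> y) (\<lambda>y. \<nu> y + \<rho> y) = W \<mu> \<nu>"
proof (rule antisym)
  obtain T0 where T0: "plan \<mu> \<nu> T0" using plan_ex[OF mu nu s] by blast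
  show "W (\<lambda>y. \<mu> y + \<rho> y) (\<lambda>y. \<nu> y + \<rho> y) \<le> W \<mu> \<nu>"
  proof (rule W_ge[OF T0])
    fix T assume T: "plan \<mu> \<nu> T"
    let ?T = "\<lambda>x y. T x y + (if x = y then \<rho> x else 0)"
    have p: "plan (\<lambda>y. \<mu> y + \<rho> y) (\<lambda>y. \<nu> y + \<rho> y) ?T"
      using T rho fin unfolding transport_plan_def by (auto simp: sum.distrib)
    have "cost ?T = cost T" unfolding cost_def by (auto simp: algebra_simps sum.distrib intro!: sum.neutral)
    then show "W (\<lambda>y. \<mu> y + \<rho> y) (\<lambda>y. \<nu> y + \<rho> y) \<le> cost T" using W_le[OF p] by simp
  qed
  obtain T1 where T1: "plan (\<lambda>y. \<mu> y + \<rho> y) (\<lambda>y. \<nu> y + \<rho> y) T1"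
    using plan_ex[of "\<lambda>y. \<mu> y + \<rho> y" "\<lambda>y. \<nu> y + \<rho> y"] rho mu nu s by (auto simp: sum.distrib)
  show "W \<mu> \<nu> \<le> W (\<lambda>y. \<mu> y + \<rho> y) (\<lambda>y. \<nu> y + \<rho> y)"
  proof (rule W_ge[OF T1])
    fix T assume "plan (\<lambda>y. \<mu> y + \<rho> y) (\<lambda>y. \<nu> y + \<rho> y) T"
    then obtain S where "plan \<mu> \<nu> S" "cost S \<le> cost T" using cancel rho mu nu by blast
    then show "W \<mu> \<nu> \<le> cost T" using W_le by force
  qed
qed

lemma W_lip1:
  assumes mu: "\<forall>y\<in>V. \<mu> y \<ge> 0" and mu': "\<forall>y\<in>V. \<mu>' y \<ge> 0" and nu: "\<forall>y\<in>V. \<nu> y \<ge> 0"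
    and s1: "sum \<mu> V = sum \<nu> V" and s2: "sum \<mu>' V = sum \<nu> V"
  shows "W \<mu>' \<nu> \<le> W \<mu> \<nu> + real Dsum * (\<Sum>x\<in>V. \<bar>\<mu> x - \<mu>' x\<bar>)"
proof -
  define p where "p = (\<lambda>x. max (\<mu> x - \<mu>' x) 0)"
  define q where "q = (\<lambda>x. max (\<mu>' x - \<mu> x) 0)"
  have pq: "\<mu>' x + p x = \<mu> x + q x" for x unfolding p_def q_def by auto
  have pnn: "\<forall>y\<in>V. p y \<ge> 0" and qnn: "\<forall>y\<in>V. q y \<ge> 0" unfolding p_def q_def by auto
  have "sum p V - sum q V = sum \<mu> V - sum \<mu>' V"
    unfolding sum_subtractf[symmetric] by (intro sum.cong) (auto simp: p_def q_def)
  then have spq: "sum q V = sum p V" using s1 s2 by simp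
  have qle: "sum q V \<le> (\<Sum>x\<in>V. \<bar>\<mu> x - \<mu>' x\<bar>)" unfolding q_def by (intro sum_mono) auto
  have eq1: "W \<mu>' \<nu> = W (\<lambda>y. \<mu>' y + p y) (\<lambda>y. \<nu> y + p y)"
    using W_cancel[OF pnn mu' nu s2] by simp
  also have "\<dots> = W (\<lambda>y. \<mu> y + q y) (\<lambda>y. \<nu> y + p y)" using pq by simp
  finally have eq: "W \<mu>' \<nu> = W (\<lambda>y. \<mu> y + q y) (\<lambda>y. \<nu> y + p y)" .
  obtain P where P: "plan q p P" using plan_ex[OF qnn pnn spq] by blast
  have cP: "cost P \<le> real Dsum * sum q V"
  proof -
    have "cost P \<le> (\<Sum>x\<in>V. \<Sum>y\<in>V. real Dsum * P x y)" unfolding cost_def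
      using P d_le_Dsum unfolding transport_plan_def by (intro sum_mono mult_right_mono) auto
    also have "\<dots> = real Dsum * sum q V" using P unfolding transport_plan_def
      by (simp add: sum_distrib_left[symmetric])
    finally show ?thesis .
  qed
  obtain T0 where T0: "plan \<mu> \<nu> T0" using plan_ex[OF mu nu s1] by blast
  have "W \<mu>' \<nu> - real Dsum * sum q V \<le> W \<mu> \<nu>"
  proof (rule W_ge[OF T0])
    fix T assume T: "plan \<mu> \<nu> T"
    have "plan (\<lambda>y. \<mu> y + q y) (\<lambda>y. \<nu> y + p y) (\<lambda>x y. T x y + P x y)"
      using T P unfolding transport_plan_def by (auto simp: sum.distrib)
    from W_le[OF this] have "W \<mu>' \<nu> \<le> cost T + cost P" unfolding eq
      by (simp add: cost_def algebra_simps sum.distrib)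
    then show "W \<mu>' \<nu> - real Dsum * sum q V \<le> cost T" using cP by simp
  qed
  then show ?thesis using qle by (smt (verit) mult_left_mono of_nat_0_le_iff)
qed

lemma W_lip:
  assumes mu: "\<forall>y\<in>V. \<mu> y \<ge> 0" and mu': "\<forall>y\<in>V. \<mu>' y \<ge> 0" and nu: "\<forall>y\<in>V. \<nu> y \<ge> 0"
    and nu': "\<forall>y\<in>V. \<nu>' y \<ge> 0"
    and s: "sum \<mu> V = 1" "sum \<mu>' V = 1" "sum \<nu> V = 1" "sum \<nu>' V = 1"
  shows "\<bar>W \<mu>' \<nu>' - W \<mu> \<nu>\<bar> \<le> real Dsum * ((\<Sum>x\<in>V. \<bar>\<mu> x - \<mu>' x\<bar>) + (\<Sum>x\<in>V. \<bar>\<nu> x - \<nu>' x\<bar>))"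
proof -
  have a1: "W \<mu>' \<nu> \<le> W \<mu> \<nu> + real Dsum * (\<Sum>x\<in>V. \<bar>\<mu> x - \<mu>' x\<bar>)"
    using W_lip1[OF mu mu' nu] s by simp
  have a2: "W \<mu> \<nu> \<le> W \<mu>' \<nu> + real Dsum * (\<Sum>x\<in>V. \<bar>\<mu>' x - \<mu> x\<bar>)"
    using W_lip1[OF mu' mu nu] s by simp
  have b1: "W \<nu>' \<mu>' \<le> W \<nu> \<mu>' + real Dsum * (\<Sum>x\<in>V. \<bar>\<nu> x - \<nu>' x\<bar>)"
    using W_lip1[OF nu nu' mu'] s by simp
  have b2: "W \<nu> \<mu>' \<le> W \<nu>' \<mu>' + real Dsum * (\<Sum>x\<in>V. \<bar>\<nu>' x - \<nu> x\<bar>)"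
    using W_lip1[OF nu' nu mu'] s by simp
  have c1: "(\<Sum>x\<in>V. \<bar>\<mu>' x - \<mu> x\<bar>) = (\<Sum>x\<in>V. \<bar>\<mu> x - \<mu>' x\<bar>)" by (simp add: abs_minus_commute)
  have c2: "(\<Sum>x\<in>V. \<bar>\<nu>' x - \<nu> x\<bar>) = (\<Sum>x\<in>V. \<bar>\<nu> x - \<nu>' x\<bar>)" by (simp add: abs_minus_commute)
  show ?thesis using a1 a2 b1 b2 c1 c2 W_sym[of \<nu>' \<mu>'] W_sym[of \<nu> \<mu>'] by (simp add: abs_le_iff algebra_simps)
qed

definition l1conv :: "(nat \<Rightarrow> 'a \<Rightarrow> real) \<Rightarrow> ('a \<Rightarrow> real) \<Rightarrow> bool" where
  "l1conv F f \<longleftrightarrow> (\<lambda>k. \<Sum>x\<in>V. \<bar>F k x - f x\<bar>) \<longlonglongrightarrow> 0"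

definition prob :: "('a \<Rightarrow> real) \<Rightarrow> bool" where
  "prob f \<longleftrightarrow> (\<forall>x\<in>V. f x \<ge> 0) \<and> sum f V = 1"

lemma W_tendsto:
  assumes "\<And>k. prob (\<mu> k)" "\<And>k. prob (\<nu> k)" "prob \<mu>0" "prob \<nu>0"
    and "l1conv \<mu> \<mu>0" "l1conv \<nu> \<nu>0"
  shows "(\<lambda>k. W (\<mu> k) (\<nu> k)) \<longlonglongrightarrow> W \<mu>0 \<nu>0"
proof -
  define b where "b = (\<lambda>k. real Dsum * ((\<Sum>x\<in>V. \<bar>\<mu>0 x - \<mu> k x\<bar>) + (\<Sum>x\<in>V. \<bar>\<nu>0 x - \<nu> k x\<bar>)))"
  have bd: "\<bar>W (\<mu> k) (\<nu> k) - W \<mu>0 \<nu>0\<bar> \<le> b k" for k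
    unfolding b_def using assms(1-4) unfolding prob_def by (intro W_lip) auto
  have "(\<lambda>k. (\<Sum>x\<in>V. \<bar>\<mu>0 x - \<mu> k x\<bar>)) \<longlonglongrightarrow> 0" "(\<lambda>k. (\<Sum>x\<in>V. \<bar>\<nu>0 x - \<nu> k x\<bar>)) \<longlonglongrightarrow> 0"
    using assms(5,6) unfolding l1conv_def by (simp_all add: abs_minus_commute)
  then have b0: "b \<longlonglongrightarrow> 0" unfolding b_def by (intro tendsto_mult_right_zero tendsto_mult_left_zero tendsto_add_zero)
  have l: "(\<lambda>k. W \<mu>0 \<nu>0 - b k) \<longlonglongrightarrow> W \<mu>0 \<nu>0" "(\<lambda>k. W \<mu>0 \<nu>0 + b k) \<longlonglongrightarrow> W \<mu>0 \<nu>0"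
    using b0 by (auto intro!: tendsto_eq_intros)
  show ?thesis
    by (rule tendsto_sandwich[OF _ _ l(1) l(2)]) (use bd in \<open>auto simp: abs_le_iff algebra_simps\<close>)
qed

end


locale cgraph2 = cgraph +
  fixes g :: real
  assumes two: "card V \<ge> 2" and g0: "0 \<le> g" and g1: "g \<le> 1"
begin

abbreviation "P \<equiv> trans_prob V E g"

definition step :: "('a \<Rightarrow> real) \<Rightarrow> 'a \<Rightarrow> real" where
  "step f = (\<lambda>t. \<Sum>s\<in>V. f s * P s t)"

definition wd :: "('a \<Rightarrow> real) \<Rightarrow> nat \<Rightarrow> 'a \<Rightarrow> real" where
  "wd f k = (step ^^ k) f"

definition dlt :: "'a \<Rightarrow> 'a \<Rightarrow> real" where
  "dlt w = (\<lambda>t. if t = w then 1 else 0)"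

lemma wd_0[simp]: "wd f 0 = f" and wd_Suc: "wd f (Suc k) = step (wd f k)"
  unfolding wd_def by auto

lemma walk_dist_wd: "walk_dist V E g w k = wd (dlt w) k"
  by (induction k) (auto simp: wd_Suc step_def dlt_def)

lemma wd_add: "wd f (a + b) = wd (wd f a) b"
  unfolding wd_def by (metis add.commute comp_apply funpow_add)

lemma nbr: assumes "x \<in> V" shows "\<exists>y. E x y"
proof -
  have "\<exists>y\<in>V. y \<noteq> x"
  proof (rule ccontr)
    assume "\<not> ?thesis" then have "V \<subseteq> {x}" by auto
    then have "card V \<le> 1" using card_mono[of "{x}" V] by auto
    then show False using two by simp
  qed
  then obtain y where y: "y \<in> V" "y \<noteq> x" by auto
  obtain n where "(x, y) \<in> R ^^ n" using walk_ex[OF assms y(1)] by auto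
  moreover have "n \<noteq> 0" using calculation y by (cases n) auto
  ultimately obtain m where "(x, y) \<in> R ^^ Suc m" by (metis not0_implies_Suc)
  then obtain z where "(x, z) \<in> R" using relpow_Suc_D2 by metis
  then show ?thesis by auto
qed

lemma deg_pos: "x \<in> V \<Longrightarrow> deg V E x > 0"
  unfolding deg_def using nbr fin EV by (metis (mono_tags, lifting) card_gt_0_iff empty_iff finite_subset mem_Collect_eq subsetI)

lemma P_self: "s \<in> V \<Longrightarrow> P s s = g"
  using deg_pos[of s] unfolding trans_prob_def by auto

lemma P_edge: "E s t \<Longrightarrow> P s t = (1 - g) / real (deg V E s)"
  using deg_pos EV Eirr unfolding trans_prob_def by (metis not_less0)

lemma P_zero: "s \<noteq> t \<Longrightarrow> \<not> E s t \<Longrightarrow> s \<in> V \<Longrightarrow> P s t = 0"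
  using deg_pos[of s] unfolding trans_prob_def by auto

lemma P_nn: "P s t \<ge> 0"
  using g0 g1 unfolding trans_prob_def by auto

lemma P_rowsum: assumes "s \<in> V" shows "(\<Sum>t\<in>V. P s t) = 1"
proof -
  have "P s t = (if t = s then g else 0) + (if E s t then (1 - g) / real (deg V E s) else 0)" for t
    using P_self P_edge P_zero assms Eirr by auto
  then have "(\<Sum>t\<in>V. P s t) = g + (\<Sum>t\<in>V. if E s t then (1 - g) / real (deg V E s) else 0)"
    using assms fin by (simp add: sum.distrib)
  also have "(\<Sum>t\<in>V. if E s t then (1 - g) / real (deg V E s) else 0) = real (deg V E s) * ((1 - g) / real (deg V E s))"
    using fin by (simp add: sum.If_cases deg_def Int_def conj_commute)
  also have "\<dots> = 1 - g" using deg_pos[OF assms] by simp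
  finally show ?thesis by simp
qed

lemma step_cong: "(\<And>x. x \<in> V \<Longrightarrow> f x = h x) \<Longrightarrow> step f = step h"
  unfolding step_def by auto

lemma step_sum: "(\<Sum>t\<in>V. step f t) = sum f V"
proof -
  have "(\<Sum>t\<in>V. step f t) = (\<Sum>s\<in>V. f s * (\<Sum>t\<in>V. P s t))"
    unfolding step_def by (subst sum.swap) (simp add: sum_distrib_left)
  also have "\<dots> = sum f V" using P_rowsum by simp
  finally show ?thesis .
qed

lemma wd_sum: "(\<Sum>t\<in>V. wd f n t) = sum f V"
  by (induction n) (auto simp: wd_Suc step_sum)

lemma step_l1: "(\<Sum>t\<in>V. \<bar>step f t\<bar>) \<le> (\<Sum>s\<in>V. \<bar>f s\<bar>)"
proof -
  have "(\<Sum>t\<in>V. \<bar>step f t\<bar>) \<le> (\<Sum>t\<in>V. \<Sum>s\<in>V. \<bar>f s\<bar> * P s t)"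
    unfolding step_def by (intro sum_mono order.trans[OF sum_abs]) (simp add: abs_mult P_nn)
  also have "\<dots> = (\<Sum>s\<in>V. \<bar>f s\<bar> * (\<Sum>t\<in>V. P s t))"
    by (subst sum.swap) (simp add: sum_distrib_left)
  also have "\<dots> = (\<Sum>s\<in>V. \<bar>f s\<bar>)" using P_rowsum by simp
  finally show ?thesis .
qed

lemma wd_l1_mono: "m \<le> n \<Longrightarrow> (\<Sum>t\<in>V. \<bar>wd f n t\<bar>) \<le> (\<Sum>t\<in>V. \<bar>wd f m t\<bar>)"
proof (induction n)
  case 0 then show ?case by simp
next
  case (Suc n)
  show ?case
  proof (cases "m = Suc n")
    case False
    then have "m \<le> n" using Suc by simp
    then show ?thesis using Suc.IH step_l1[of "wd f n"] by (simp add: wd_Suc)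
  qed simp
qed

lemma step_diff: "step (\<lambda>x. f x - h x) = (\<lambda>t. step f t - step h t)"
  unfolding step_def by (auto simp: algebra_simps sum_subtractf)

lemma wd_diff: "wd (\<lambda>x. f x - h x) n = (\<lambda>t. wd f n t - wd h n t)"
  by (induction n) (auto simp: wd_Suc step_diff)

lemma step_nn: "\<forall>x\<in>V. f x \<ge> 0 \<Longrightarrow> step f t \<ge> 0"
  unfolding step_def by (auto intro!: sum_nonneg simp: P_nn)

lemma wd_nn: "\<forall>x\<in>V. f x \<ge> 0 \<Longrightarrow> t \<in> V \<Longrightarrow> wd f n t \<ge> 0"
  by (induction n arbitrary: t) (auto simp: wd_Suc step_nn)

lemma step_ge: "\<forall>x\<in>V. f x \<ge> 0 \<Longrightarrow> s \<in> V \<Longrightarrow> step f t \<ge> f s * P s t"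
  unfolding step_def using fin by (intro member_le_sum) (auto simp: P_nn)

lemma dlt_nn: "\<forall>x\<in>V. dlt w x \<ge> 0" unfolding dlt_def by auto

lemma wd_decomp: "t \<in> V \<Longrightarrow> wd f n t = (\<Sum>x\<in>V. f x * wd (dlt x) n t)"
proof (induction n arbitrary: t)
  case 0
  have "(\<Sum>x\<in>V. f x * dlt x t) = (\<Sum>x\<in>V. if x = t then f t else 0)" by (rule sum.cong) (auto simp: dlt_def)
  then show ?case using fin 0 by simp
next
  case (Suc n)
  have "wd f (Suc n) t = (\<Sum>s\<in>V. (\<Sum>x\<in>V. f x * wd (dlt x) n s) * P s t)"
    unfolding wd_Suc step_def using Suc.IH by simp
  also have "\<dots> = (\<Sum>s\<in>V. \<Sum>x\<in>V. f x * (wd (dlt x) n s * P s t))"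
    by (simp add: sum_distrib_right mult.assoc)
  also have "\<dots> = (\<Sum>x\<in>V. \<Sum>s\<in>V. f x * (wd (dlt x) n s * P s t))"
    by (rule sum.swap)
  also have "\<dots> = (\<Sum>x\<in>V. f x * wd (dlt x) (Suc n) t)"
    unfolding wd_Suc step_def by (simp add: sum_distrib_left)
  finally show ?case .
qed

lemma walk_pos: "g < 1 \<Longrightarrow> (x, y) \<in> R ^^ n \<Longrightarrow> x \<in> V \<Longrightarrow> wd (dlt x) n y > 0"
proof (induction n arbitrary: y)
  case 0 then show ?case by (auto simp: dlt_def)
next
  case (Suc n)
  then obtain z where z: "(x, z) \<in> R ^^ n" "E z y" by (auto elim: relpow_Suc_E)
  have zV: "z \<in> V" using z(2) EV by auto
  have "wd (dlt x) n z * P z y > 0" using Suc.IH[OF Suc.prems(1) z(1) Suc.prems(3)] P_edge[OF z(2)]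
      deg_pos[OF zV] Suc.prems(1) by simp
  also have "\<dots> \<le> wd (dlt x) (Suc n) y" unfolding wd_Suc
    by (rule step_ge[OF _ zV]) (use wd_nn[OF dlt_nn] in auto)
  finally show ?case .
qed

lemma lazy_pos: "g > 0 \<Longrightarrow> \<forall>x\<in>V. f x \<ge> 0 \<Longrightarrow> y \<in> V \<Longrightarrow> wd f n y > 0 \<Longrightarrow> wd f (Suc n) y > 0"
proof -
  assume a: "g > 0" "\<forall>x\<in>V. f x \<ge> 0" "y \<in> V" "wd f n y > 0"
  have "wd f n y * P y y > 0" using a P_self by simp
  also have "\<dots> \<le> wd f (Suc n) y" unfolding wd_Suc
    by (rule step_ge[OF _ a(3)]) (use wd_nn[OF a(2)] in auto)
  finally show ?thesis .
qed

lemma lazy_pos': "g > 0 \<Longrightarrow> \<forall>x\<in>V. f x \<ge> 0 \<Longrightarrow> y \<in> V \<Longrightarrow> wd f n y > 0 \<Longrightarrow> n \<le> m \<Longrightarrow> wd f m y > 0"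
  by (induction m) (auto simp: le_Suc_eq intro: lazy_pos)

lemma doeblin:
  assumes AV: "A \<subseteq> V" and dpos: "\<delta> > 0"
    and K: "\<forall>x\<in>A. \<forall>y\<in>A. wd (dlt x) N y \<ge> \<delta>"
    and h0: "\<forall>x\<in>V - A. h x = 0" and hs: "sum h V = 0"
  shows "(\<Sum>y\<in>V. \<bar>wd h N y\<bar>) \<le> (1 - \<delta> * card A) * (\<Sum>x\<in>V. \<bar>h x\<bar>)"
proof -
  define K where "K = (\<lambda>x y. wd (dlt x) N y)"
  define I where "I = (\<lambda>y. if y \<in> A then \<delta> else 0)"
  have finA: "finite A" using AV fin finite_subset by auto
  have hA: "sum h A = 0" using sum.mono_neutral_left[OF fin AV, of h] h0 hs by auto
  have habsA: "(\<Sum>x\<in>V. \<bar>h x\<bar>) = (\<Sum>x\<in>A. \<bar>h x\<bar>)"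
    using sum.mono_neutral_right[OF fin AV, of "\<lambda>x. \<bar>h x\<bar>"] h0 by auto
  have KI: "x \<in> A \<Longrightarrow> y \<in> V \<Longrightarrow> K x y - I y \<ge> 0" for x y
    using K wd_nn[OF dlt_nn, of y] unfolding K_def I_def by auto
  have pt: "\<bar>wd h N y\<bar> \<le> (\<Sum>x\<in>A. \<bar>h x\<bar> * (K x y - I y))" if y: "y \<in> V" for y
  proof -
    have "wd h N y = (\<Sum>x\<in>V. h x * K x y)" unfolding K_def using wd_decomp[OF y] .
    also have "\<dots> = (\<Sum>x\<in>A. h x * K x y)"
      using sum.mono_neutral_right[OF fin AV, of "\<lambda>x. h x * K x y"] h0 by auto
    also have "\<dots> = (\<Sum>x\<in>A. h x * (K x y - I y))"
      using hA by (simp add: algebra_simps sum_subtractf sum_distrib_right[symmetric] sum_distrib_left[symmetric])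
    finally have "\<bar>wd h N y\<bar> = \<bar>\<Sum>x\<in>A. h x * (K x y - I y)\<bar>" by simp
    also have "\<dots> \<le> (\<Sum>x\<in>A. \<bar>h x * (K x y - I y)\<bar>)" by (rule sum_abs)
    also have "\<dots> = (\<Sum>x\<in>A. \<bar>h x\<bar> * (K x y - I y))" using KI y by (intro sum.cong) (auto simp: abs_mult)
    finally show ?thesis .
  qed
  have "(\<Sum>y\<in>V. \<bar>wd h N y\<bar>) \<le> (\<Sum>y\<in>V. \<Sum>x\<in>A. \<bar>h x\<bar> * (K x y - I y))"
    using pt by (intro sum_mono) auto
  also have "\<dots> = (\<Sum>x\<in>A. \<bar>h x\<bar> * ((\<Sum>y\<in>V. K x y) - sum I V))"
    by (subst sum.swap) (simp add: sum_distrib_left[symmetric] sum_subtractf)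
  also have "\<dots> = (\<Sum>x\<in>A. \<bar>h x\<bar> * (1 - \<delta> * card A))"
  proof (intro sum.cong refl)
    fix x assume x: "x \<in> A"
    have "(\<Sum>y\<in>V. K x y) = 1" unfolding K_def wd_sum using x AV fin by (auto simp: dlt_def)
    moreover have "sum I V = \<delta> * card A" unfolding I_def using AV fin
      by (simp add: sum.If_cases Int_absorb1 Int_def) (metis Collect_mem_eq Int_absorb1 Int_def)
    ultimately show "\<bar>h x\<bar> * ((\<Sum>y\<in>V. K x y) - sum I V) = \<bar>h x\<bar> * (1 - \<delta> * card A)" by simp
  qed
  also have "\<dots> = (1 - \<delta> * card A) * (\<Sum>x\<in>V. \<bar>h x\<bar>)" unfolding habsA
    by (simp add: sum_distrib_right mult.commute)
  finally show ?thesis .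
qed

end


lemma pow_div_lim:
  fixes c :: real
  assumes "0 \<le> c" "c < 1" "N > 0"
  shows "(\<lambda>k. c ^ (k div N)) \<longlonglongrightarrow> 0"
proof -
  have l: "(\<lambda>j. c ^ j) \<longlonglongrightarrow> 0" using assms by (intro LIMSEQ_power_zero) auto
  show ?thesis unfolding lim_sequentially
  proof (intro allI impI)
    fix r :: real assume "r > 0"
    then obtain J where J: "\<forall>j\<ge>J. dist (c ^ j) 0 < r" using l unfolding lim_sequentially by blast
    have "\<forall>k\<ge>J * N. dist (c ^ (k div N)) 0 < r"
    proof (intro allI impI)
      fix k assume "k \<ge> J * N"
      then have "k div N \<ge> J" using assms(3) by (metis div_le_mono div_mult_self_is_m)
      then show "dist (c ^ (k div N)) 0 < r" using J by auto
    qed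
    then show "\<exists>no. \<forall>n\<ge>no. dist (c ^ (n div N)) 0 < r" by blast
  qed
qed

context cgraph2
begin

lemma doeblin_iter:
  assumes AV: "A \<subseteq> V" and Ane: "A \<noteq> {}" and dpos: "\<delta> > 0"
    and K: "\<forall>x\<in>A. \<forall>y\<in>A. wd (dlt x) N y \<ge> \<delta>"
    and sup: "\<And>h. \<forall>x\<in>V - A. h x = 0 \<Longrightarrow> \<forall>x\<in>V - A. wd h N x = 0"
    and h0: "\<forall>x\<in>V - A. h x = 0" and hs: "sum h V = 0"
  shows "(\<forall>x\<in>V - A. wd h (j * N) x = 0) \<and> sum (wd h (j * N)) V = 0 \<and>
     (\<Sum>y\<in>V. \<bar>wd h (j * N) y\<bar>) \<le> (1 - \<delta> * card A) ^ j * (\<Sum>x\<in>V. \<bar>h x\<bar>)"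
proof (induction j)
  case 0 then show ?case using h0 hs by simp
next
  case (Suc j)
  have c0: "0 \<le> 1 - \<delta> * card A"
  proof -
    obtain x where x: "x \<in> A" using Ane by auto
    have finA: "finite A" using AV fin finite_subset by auto
    have "\<delta> * card A = (\<Sum>y\<in>A. \<delta>)" by simp
    also have "\<dots> \<le> (\<Sum>y\<in>A. wd (dlt x) N y)" using K x by (intro sum_mono) auto
    also have "\<dots> \<le> (\<Sum>y\<in>V. wd (dlt x) N y)"
      using AV fin wd_nn[OF dlt_nn] by (intro sum_mono2) auto
    also have "\<dots> = 1" unfolding wd_sum using x AV fin by (auto simp: dlt_def)
    finally show ?thesis by simp
  qed
  have e: "wd h (Suc j * N) = wd (wd h (j * N)) N" using wd_add[of h "j * N" N] by (simp add: add.commute)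
  show ?case unfolding e
  proof (intro conjI)
    show "\<forall>x\<in>V - A. wd (wd h (j * N)) N x = 0" using sup Suc by blast
    show "sum (wd (wd h (j * N)) N) V = 0" using Suc wd_sum by simp
    have "(\<Sum>y\<in>V. \<bar>wd (wd h (j * N)) N y\<bar>) \<le> (1 - \<delta> * card A) * (\<Sum>x\<in>V. \<bar>wd h (j * N) x\<bar>)"
      using Suc by (intro doeblin[OF AV dpos K]) auto
    also have "\<dots> \<le> (1 - \<delta> * card A) * ((1 - \<delta> * card A) ^ j * (\<Sum>x\<in>V. \<bar>h x\<bar>))"
      using Suc c0 by (intro mult_left_mono) auto
    finally show "(\<Sum>y\<in>V. \<bar>wd (wd h (j * N)) N y\<bar>) \<le> (1 - \<delta> * card A) ^ Suc j * (\<Sum>x\<in>V. \<bar>h x\<bar>)"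
      by simp
  qed
qed

lemma doeblin_lim:
  assumes AV: "A \<subseteq> V" and Ane: "A \<noteq> {}" and dpos: "\<delta> > 0" and N: "N > 0"
    and K: "\<forall>x\<in>A. \<forall>y\<in>A. wd (dlt x) N y \<ge> \<delta>"
    and sup: "\<And>h. \<forall>x\<in>V - A. h x = 0 \<Longrightarrow> \<forall>x\<in>V - A. wd h N x = 0"
    and h0: "\<forall>x\<in>V - A. h x = 0" and hs: "sum h V = 0"
  shows "(\<lambda>k. \<Sum>y\<in>V. \<bar>wd h k y\<bar>) \<longlonglongrightarrow> 0"
proof -
  define c where "c = 1 - \<delta> * card A"
  have c0: "0 \<le> c"
  proof -
    obtain x where x: "x \<in> A" using Ane by auto
    have "\<delta> * card A = (\<Sum>y\<in>A. \<delta>)" by simp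
    also have "\<dots> \<le> (\<Sum>y\<in>A. wd (dlt x) N y)" using K x by (intro sum_mono) auto
    also have "\<dots> \<le> (\<Sum>y\<in>V. wd (dlt x) N y)"
      using AV fin wd_nn[OF dlt_nn] by (intro sum_mono2) auto
    also have "\<dots> = 1" unfolding wd_sum using x AV fin by (auto simp: dlt_def)
    finally show ?thesis unfolding c_def by simp
  qed
  have c1: "c < 1" unfolding c_def using dpos Ane AV fin
    by (simp add: card_gt_0_iff finite_subset)
  have bd: "(\<Sum>y\<in>V. \<bar>wd h k y\<bar>) \<le> c ^ (k div N) * (\<Sum>x\<in>V. \<bar>h x\<bar>)" for k
  proof -
    have "(\<Sum>y\<in>V. \<bar>wd h k y\<bar>) \<le> (\<Sum>y\<in>V. \<bar>wd h (k div N * N) y\<bar>)"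
      by (rule wd_l1_mono) (simp add: div_times_less_eq_dividend)
    also have "\<dots> \<le> c ^ (k div N) * (\<Sum>x\<in>V. \<bar>h x\<bar>)"
      using doeblin_iter[OF AV Ane dpos K sup h0 hs] unfolding c_def by blast
    finally show ?thesis .
  qed
  have "(\<lambda>k. c ^ (k div N) * (\<Sum>x\<in>V. \<bar>h x\<bar>)) \<longlonglongrightarrow> 0"
    using pow_div_lim[OF c0 c1 N] by (rule tendsto_mult_left_zero)
  then show ?thesis
    by (rule tendsto_sandwich[rotated 2, OF tendsto_const]) (use bd in \<open>auto intro!: sum_nonneg\<close>)
qed

lemma pos_unif:
  assumes "A \<subseteq> V" "A \<noteq> {}" "\<forall>x\<in>A. \<forall>y\<in>A. wd (dlt x) N y > 0"
  shows "\<exists>\<delta>>0. \<forall>x\<in>A. \<forall>y\<in>A. wd (dlt x) N y \<ge> \<delta>"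
proof -
  define S where "S = (\<lambda>(x, y). wd (dlt x) N y) ` (A \<times> A)"
  have fS: "finite S" unfolding S_def using assms(1) fin by (meson finite_SigmaI finite_imageI finite_subset)
  have nS: "S \<noteq> {}" unfolding S_def using assms(2) by auto
  have "Min S > 0" using fS nS assms(3) unfolding S_def by (subst Min_gr_iff) auto
  moreover have "\<forall>x\<in>A. \<forall>y\<in>A. wd (dlt x) N y \<ge> Min S" using fS unfolding S_def
    by (auto intro!: Min_le)
  ultimately show ?thesis by blast
qed

end


context cgraph
begin

definition Dg :: real where "Dg = (\<Sum>x\<in>V. real (deg V E x))"
definition pi :: "'a \<Rightarrow> real" where "pi x = real (deg V E x) / Dg"
definition qc :: "('a \<Rightarrow> bool) \<Rightarrow> bool \<Rightarrow> 'a \<Rightarrow> real" where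
  "qc c b x = (if c x = b then 2 * pi x else 0)"

lemma deg_sym: "t \<in> V \<Longrightarrow> card {s \<in> V. E s t} = deg V E t"
  unfolding deg_def using Esym by metis

end

context cgraph2
begin

lemma Dg_pos: "Dg > 0"
proof -
  obtain x where "x \<in> V" using Vne by auto
  then have "0 < real (deg V E x)" using deg_pos by simp
  also have "\<dots> \<le> Dg" unfolding Dg_def using fin \<open>x \<in> V\<close> by (intro member_le_sum) auto
  finally show ?thesis .
qed

lemma pi_prob: "prob pi"
  unfolding prob_def pi_def using Dg_pos by (auto simp: sum_divide_distrib[symmetric] Dg_def)

lemma P_split: "s \<in> V \<Longrightarrow> P s t = (if s = t then g else 0) + (if E s t then (1 - g) / real (deg V E s) else 0)"
  using P_self P_edge P_zero Eirr by auto

lemma card_if_sum: "(\<Sum>s\<in>V. if Q s then (a::real) else 0) = a * card {s \<in> V. Q s}"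
  using fin by (simp add: sum.If_cases Int_def conj_commute)

lemma step_pi: assumes t: "t \<in> V" shows "step pi t = pi t"
proof -
  have "pi s * P s t = (if s = t then g * pi t else 0) + (if E s t then (1 - g) / Dg else 0)" if s: "s \<in> V" for s
  proof (cases "s = t")
    case True then show ?thesis using P_self[OF s] Eirr by (simp add: mult.commute)
  next
    case False
    show ?thesis
    proof (cases "E s t")
      case True
      have "pi s * P s t = (1 - g) / Dg" unfolding pi_def P_edge[OF True] using deg_pos[OF s] Dg_pos by (simp add: field_simps)
      then show ?thesis using False True by simp
    next
      case f2: False
      then show ?thesis using False P_zero[OF False f2 s] by simp
    qed
  qed
  then have "step pi t = (\<Sum>s\<in>V. (if s = t then g * pi t else 0) + (if E s t then (1 - g) / Dg else 0))"
    unfolding step_def by (intro sum.cong) auto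
  also have "\<dots> = (\<Sum>s\<in>V. if s = t then g * pi t else 0) + (\<Sum>s\<in>V. if E s t then (1 - g) / Dg else 0)"
    by (rule sum.distrib)
  also have "\<dots> = g * pi t + (1 - g) / Dg * real (deg V E t)"
    using t fin card_if_sum[of "\<lambda>s. E s t" "(1 - g) / Dg"] deg_sym[OF t] by simp
  also have "\<dots> = pi t" unfolding pi_def using Dg_pos by (simp add: field_simps)
  finally show ?thesis .
qed

lemma wd_pi: "t \<in> V \<Longrightarrow> wd pi k t = pi t"
proof (induction k arbitrary: t)
  case 0 then show ?case by simp
next
  case (Suc k)
  have "step (wd pi k) = step pi" using Suc.IH by (intro step_cong) auto
  then show ?case using step_pi[OF Suc.prems] by (simp add: wd_Suc)
qed

lemma l1conv_of_diff:
  assumes "(\<lambda>k. \<Sum>y\<in>V. \<bar>wd (\<lambda>x. f x - h x) (s k) y\<bar>) \<longlonglongrightarrow> 0"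
    and "\<And>k y. y \<in> V \<Longrightarrow> wd h (s k) y = r y"
  shows "l1conv (\<lambda>k. wd f (s k)) r"
proof -
  have "(\<Sum>y\<in>V. \<bar>wd (\<lambda>x. f x - h x) (s k) y\<bar>) = (\<Sum>y\<in>V. \<bar>wd f (s k) y - r y\<bar>)" for k
    unfolding wd_diff using assms(2) by (intro sum.cong) auto
  then show ?thesis using assms(1) unfolding l1conv_def by simp
qed

lemma conv_from_pos:
  assumes N: "N > 0" and pos: "\<forall>x\<in>V. \<forall>y\<in>V. wd (dlt x) N y > 0" and w: "w \<in> V"
  shows "l1conv (\<lambda>k. wd (dlt w) k) pi"
proof -
  obtain \<delta> where d: "\<delta> > 0" "\<forall>x\<in>V. \<forall>y\<in>V. wd (dlt x) N y \<ge> \<delta>"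
    using pos_unif[OF order_refl Vne pos] by blast
  have hs: "sum (\<lambda>x. dlt w x - pi x) V = 0"
    using pi_prob w fin unfolding prob_def by (simp add: sum_subtractf dlt_def)
  have "(\<lambda>k. \<Sum>y\<in>V. \<bar>wd (\<lambda>x. dlt w x - pi x) k y\<bar>) \<longlonglongrightarrow> 0"
    by (rule doeblin_lim[OF order_refl Vne d(1) N d(2)]) (use hs in auto)
  then show ?thesis using l1conv_of_diff[where s = "\<lambda>k. k"] wd_pi by blast
qed

lemma conv_lazy:
  assumes "0 < g" "g < 1" "w \<in> V"
  shows "l1conv (\<lambda>k. wd (dlt w) k) pi"
proof (rule conv_from_pos[OF _ _ assms(3)])
  show "0 < Suc Dsum" by simp
  show "\<forall>x\<in>V. \<forall>y\<in>V. 0 < wd (dlt x) (Suc Dsum) y"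
  proof (intro ballI)
    fix x y assume xy: "x \<in> V" "y \<in> V"
    have "wd (dlt x) (d x y) y > 0" using walk_pos[OF assms(2) d_walk[OF xy] xy(1)] .
    moreover have "d x y \<le> Suc Dsum" using d_le_Dsum[OF xy] by simp
    ultimately show "0 < wd (dlt x) (Suc Dsum) y" using lazy_pos'[OF assms(1) dlt_nn xy(2)] by blast
  qed
qed

lemma odd_loop:
  assumes "\<not> bipartite V E" "v0 \<in> V"
  shows "\<exists>L. odd L \<and> (v0, v0) \<in> R ^^ L"
proof -
  have "\<not> (\<forall>x\<in>V. \<forall>y\<in>V. E x y \<longrightarrow> even (d v0 x) \<noteq> even (d v0 y))"
  proof
    assume "\<forall>x\<in>V. \<forall>y\<in>V. E x y \<longrightarrow> even (d v0 x) \<noteq> even (d v0 y)"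
    then have "bipartite V E" unfolding bipartite_def by (intro exI[of _ "\<lambda>x. even (d v0 x)"]) simp
    then show False using assms(1) by simp
  qed
  then obtain x y where xy: "x \<in> V" "y \<in> V" "E x y" "even (d v0 x) = even (d v0 y)" by blast
  have "(v0, x) \<in> R ^^ d v0 x" using d_walk assms(2) xy by auto
  moreover have "(x, y) \<in> R ^^ 1" using xy by simp
  ultimately have "(v0, y) \<in> R ^^ (d v0 x + 1)" by (rule relpow_trans)
  moreover have "(y, v0) \<in> R ^^ d v0 y" using walk_rev d_walk assms(2) xy by auto
  ultimately have "(v0, v0) \<in> R ^^ (d v0 x + 1 + d v0 y)" by (rule relpow_trans)
  moreover have "odd (d v0 x + 1 + d v0 y)" using xy(4) by auto
  ultimately show ?thesis by blast
qed

lemma par1: "odd (a::nat) \<Longrightarrow> odd L \<Longrightarrow> a \<le> 2 * D \<Longrightarrow> \<exists>j. 2 * D + L = a + 2 * j"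
  by presburger

lemma par2: "even (a::nat) \<Longrightarrow> odd L \<Longrightarrow> a \<le> 2 * D \<Longrightarrow> \<exists>j. 2 * D + L = a + L + 2 * j"
  by presburger

lemma conv_nonbip:
  assumes "g = 0" "\<not> bipartite V E" "w \<in> V"
  shows "l1conv (\<lambda>k. wd (dlt w) k) pi"
proof -
  obtain L where L: "odd L" "(w, w) \<in> R ^^ L" using odd_loop[OF assms(2,3)] by blast
  let ?N = "2 * Dsum + L"
  show ?thesis
  proof (rule conv_from_pos[OF _ _ assms(3)])
    show "0 < ?N" using L by (cases L) auto
    show "\<forall>x\<in>V. \<forall>y\<in>V. 0 < wd (dlt x) ?N y"
    proof (intro ballI)
      fix x y assume xy: "x \<in> V" "y \<in> V"
      obtain z where z: "E y z" using nbr[OF xy(2)] by blast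
      have w1: "(x, y) \<in> R ^^ (d x w + d w y)"
        using d_walk[OF xy(1) assms(3)] d_walk[OF assms(3) xy(2)] by (rule relpow_trans)
      have w2: "(x, y) \<in> R ^^ (d x w + L + d w y)"
        using relpow_trans[OF relpow_trans[OF d_walk[OF xy(1) assms(3)] L(2)] d_walk[OF assms(3) xy(2)]] .
      have b: "d x w + d w y \<le> 2 * Dsum" using d_le_Dsum[OF xy(1) assms(3)] d_le_Dsum[OF assms(3) xy(2)] by simp
      have "(x, y) \<in> R ^^ ?N"
      proof (cases "odd (d x w + d w y)")
        case True
        obtain j where j: "?N = d x w + d w y + 2 * j" using par1[OF True L(1) b] by blast
        show ?thesis unfolding j by (rule pad[OF w1 z])
      next
        case False
        then have ev: "even (d x w + d w y)" by simp
        obtain j where j0: "2 * Dsum + L = (d x w + d w y) + L + 2 * j" using par2[OF ev L(1) b] by blast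
        then have j: "?N = d x w + L + d w y + 2 * j" by simp
        show ?thesis unfolding j by (rule pad[OF w2 z])
      qed
      then show "0 < wd (dlt x) ?N y" using walk_pos assms(1) xy by simp
    qed
  qed
qed

end


lemma par3: "even (a::nat) \<Longrightarrow> a \<le> D \<Longrightarrow> \<exists>j. 2 * D = a + 2 * j"
  by presburger

context cgraph2
begin

lemma step_col:
  assumes g: "g = 0" and c: "\<forall>x\<in>V. \<forall>y\<in>V. E x y \<longrightarrow> (c :: 'a \<Rightarrow> bool) x \<noteq> c y"
    and h: "\<forall>x\<in>V. c x \<noteq> b \<longrightarrow> h x = 0"
  shows "\<forall>t\<in>V. c t = b \<longrightarrow> step h t = 0"
proof (intro ballI impI)
  fix t assume t: "t \<in> V" "c t = b"
  have "h s * P s t = 0" if s: "s \<in> V" for s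
  proof (cases "c s = b")
    case True
    show ?thesis
    proof (cases "s = t")
      case True then show ?thesis using P_self[OF s] g by simp
    next
      case False
      have "\<not> E s t" using c s t \<open>c s = b\<close> by auto
      then show ?thesis using P_zero[OF False _ s] by simp
    qed
  next
    case False then show ?thesis using h s by simp
  qed
  then show "step h t = 0" unfolding step_def by (simp add: sum.neutral)
qed

lemma wd_col_even:
  assumes g: "g = 0" and c: "\<forall>x\<in>V. \<forall>y\<in>V. E x y \<longrightarrow> (c :: 'a \<Rightarrow> bool) x \<noteq> c y"
    and h: "\<forall>x\<in>V. c x \<noteq> b \<longrightarrow> h x = 0"
  shows "\<forall>t\<in>V. c t \<noteq> b \<longrightarrow> wd h (2 * j) t = 0"
proof (induction j)
  case 0 then show ?case using h by simp
next
  case (Suc j)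
  have "\<forall>t\<in>V. c t = b \<longrightarrow> step (wd h (2 * j)) t = 0"
    using step_col[OF g c] Suc.IH by blast
  then have "\<forall>t\<in>V. c t \<noteq> (\<not> b) \<longrightarrow> step (wd h (2 * j)) t = 0" by auto
  then have "\<forall>t\<in>V. c t = (\<not> b) \<longrightarrow> step (step (wd h (2 * j))) t = 0"
    using step_col[OF g c] by blast
  then show ?case by (auto simp: wd_Suc)
qed

lemma step_qc:
  assumes g: "g = 0" and c: "\<forall>x\<in>V. \<forall>y\<in>V. E x y \<longrightarrow> c x \<noteq> c y" and t: "t \<in> V"
  shows "step (qc c b) t = qc c (\<not> b) t"
proof -
  have e: "qc c b s * P s t = (if E s t \<and> c s = b then 2 / Dg else 0)" if s: "s \<in> V" for s
  proof (cases "s = t")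
    case True then show ?thesis using P_self[OF s] g Eirr by simp
  next
    case False
    show ?thesis
    proof (cases "E s t")
      case True
      then show ?thesis using P_edge[OF True] g deg_pos[OF s] Dg_pos unfolding qc_def pi_def by auto
    next
      case f2: False
      then show ?thesis using P_zero[OF False f2 s] by simp
    qed
  qed
  have "step (qc c b) t = (\<Sum>s\<in>V. if E s t \<and> c s = b then 2 / Dg else 0)"
    unfolding step_def using e by (intro sum.cong) auto
  also have "\<dots> = 2 / Dg * card {s \<in> V. E s t \<and> c s = b}" by (rule card_if_sum)
  also have "\<dots> = qc c (\<not> b) t"
  proof (cases "c t = b")
    case True
    then have "{s \<in> V. E s t \<and> c s = b} = {}" using c t by auto
    then have "card {s \<in> V. E s t \<and> c s = b} = 0" by (simp only: card.empty)
    then show ?thesis using True unfolding qc_def by simp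
  next
    case False
    then have "{s \<in> V. E s t \<and> c s = b} = {s \<in> V. E s t}" using c t by auto
    then show ?thesis using False deg_sym[OF t] unfolding qc_def pi_def by auto
  qed
  finally show ?thesis .
qed

lemma qc_sum:
  assumes g: "g = 0" and c: "\<forall>x\<in>V. \<forall>y\<in>V. E x y \<longrightarrow> c x \<noteq> c y"
  shows "sum (qc c b) V = 1"
proof -
  have "sum (qc c b) V + sum (qc c (\<not> b)) V = (\<Sum>x\<in>V. 2 * pi x)"
    unfolding sum.distrib[symmetric] by (intro sum.cong) (auto simp: qc_def)
  also have "\<dots> = 2" using pi_prob unfolding prob_def by (simp add: sum_distrib_left[symmetric])
  finally have a: "sum (qc c b) V + sum (qc c (\<not> b)) V = 2" .
  have "sum (qc c (\<not> b)) V = (\<Sum>t\<in>V. step (qc c b) t)" using step_qc[OF g c] by simp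
  also have "\<dots> = sum (qc c b) V" by (rule step_sum)
  finally show ?thesis using a by simp
qed

lemma wd_qc:
  assumes g: "g = 0" and c: "\<forall>x\<in>V. \<forall>y\<in>V. E x y \<longrightarrow> c x \<noteq> c y"
  shows "t \<in> V \<Longrightarrow> wd (qc c b) k t = (if even k then qc c b t else qc c (\<not> b) t)"
proof (induction k arbitrary: t)
  case 0 then show ?case by simp
next
  case (Suc k)
  have "step (wd (qc c b) k) = step (qc c (if even k then b else \<not> b))"
    using Suc.IH by (intro step_cong) auto
  then show ?case using step_qc[OF g c Suc.prems] by (auto simp: wd_Suc)
qed

lemma Dsum_pos: "Dsum > 0"
proof -
  have "\<exists>x\<in>V. \<exists>y\<in>V. x \<noteq> y"
  proof (rule ccontr)
    assume "\<not> ?thesis"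
    then obtain x where "V \<subseteq> {x}" using Vne by blast
    then have "card V \<le> 1" using card_mono[of "{x}" V] by auto
    then show False using two by simp
  qed
  then obtain x y where xy: "x \<in> V" "y \<in> V" "x \<noteq> y" by blast
  then have "d x y > 0" using d_zero by blast
  then show ?thesis using d_le_Dsum[OF xy(1,2)] by simp
qed

lemma conv_bip:
  assumes g: "g = 0" and c: "\<forall>x\<in>V. \<forall>y\<in>V. E x y \<longrightarrow> c x \<noteq> c y" and w: "w \<in> V"
  shows "l1conv (\<lambda>k. wd (dlt w) (2 * k)) (qc c (c w)) \<and> l1conv (\<lambda>k. wd (dlt w) (2 * k + 1)) (qc c (\<not> c w))"
proof -
  define A where "A = {x \<in> V. c x = c w}"
  define N where "N = 2 * Dsum"
  have AV: "A \<subseteq> V" and Ane: "A \<noteq> {}" using w unfolding A_def by auto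
  have N: "N > 0" unfolding N_def using Dsum_pos by simp
  have pos: "\<forall>x\<in>A. \<forall>y\<in>A. wd (dlt x) N y > 0"
  proof (intro ballI)
    fix x y assume "x \<in> A" "y \<in> A"
    then have xy: "x \<in> V" "y \<in> V" "c x = c y" unfolding A_def by auto
    have ev: "even (d x y)" using parity_d[OF c xy(1,2)] xy(3) by simp
    obtain j where j: "N = d x y + 2 * j" using par3[OF ev d_le_Dsum[OF xy(1,2)]] unfolding N_def by blast
    obtain z where z: "E y z" using nbr[OF xy(2)] by blast
    have "(x, y) \<in> R ^^ N" unfolding j by (rule pad[OF d_walk[OF xy(1,2)] z])
    then show "wd (dlt x) N y > 0" using walk_pos g xy by simp
  qed
  obtain \<delta> where d: "\<delta> > 0" "\<forall>x\<in>A. \<forall>y\<in>A. wd (dlt x) N y \<ge> \<delta>"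
    using pos_unif[OF AV Ane pos] by blast
  have sup: "\<forall>x\<in>V - A. wd h N x = 0" if "\<forall>x\<in>V - A. h x = 0" for h
  proof -
    have "\<forall>x\<in>V. c x \<noteq> c w \<longrightarrow> h x = 0" using that unfolding A_def by auto
    from wd_col_even[OF g c this, of Dsum] show ?thesis unfolding A_def N_def by auto
  qed
  define h where "h = (\<lambda>x. dlt w x - qc c (c w) x)"
  have h0: "\<forall>x\<in>V - A. h x = 0" unfolding h_def A_def dlt_def qc_def by auto
  have hs: "sum h V = 0" unfolding h_def using qc_sum[OF g c] w fin by (simp add: sum_subtractf dlt_def)
  have X: "(\<lambda>k. \<Sum>y\<in>V. \<bar>wd h k y\<bar>) \<longlonglongrightarrow> 0"
    by (rule doeblin_lim[OF AV Ane d(1) N d(2) sup h0 hs])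
  have X2: "(\<lambda>k. \<Sum>y\<in>V. \<bar>wd h (2 * k) y\<bar>) \<longlonglongrightarrow> 0"
    using LIMSEQ_linear[OF X, of 2] by (simp add: mult.commute)
  have X3: "(\<lambda>k. \<Sum>y\<in>V. \<bar>wd h (2 * k + 1) y\<bar>) \<longlonglongrightarrow> 0"
    using LIMSEQ_linear[OF LIMSEQ_Suc[OF X], of 2] by (simp add: mult.commute)
  show ?thesis
  proof
    show "l1conv (\<lambda>k. wd (dlt w) (2 * k)) (qc c (c w))"
      by (rule l1conv_of_diff[where s = "\<lambda>k. 2 * k", OF X2[unfolded h_def]]) (simp add: wd_qc[OF g c])
    show "l1conv (\<lambda>k. wd (dlt w) (2 * k + 1)) (qc c (\<not> c w))"
      by (rule l1conv_of_diff[where s = "\<lambda>k. 2 * k + 1", OF X3[unfolded h_def]]) (simp add: wd_qc[OF g c])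
  qed
qed

end


lemma eo_conv:
  fixes X :: "nat \<Rightarrow> real"
  assumes a: "(\<lambda>k. X (2 * k)) \<longlonglongrightarrow> a" and b: "(\<lambda>k. X (2 * k + 1)) \<longlonglongrightarrow> b"
  shows "convergent X \<longleftrightarrow> a = b"
proof
  assume "convergent X"
  then obtain L where L: "X \<longlonglongrightarrow> L" unfolding convergent_def by blast
  have "(\<lambda>k. X (2 * k)) \<longlonglongrightarrow> L" using LIMSEQ_linear[OF L, of 2] by (simp add: mult.commute)
  moreover have "(\<lambda>k. X (2 * k + 1)) \<longlonglongrightarrow> L" using LIMSEQ_linear[OF LIMSEQ_Suc[OF L], of 2]
    by (simp add: mult.commute)
  ultimately show "a = b" using a b LIMSEQ_unique by metis
next
  assume ab: "a = b"
  have "X \<longlonglongrightarrow> a" unfolding lim_sequentially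
  proof (intro allI impI)
    fix r :: real assume r: "r > 0"
    obtain N1 where N1: "\<forall>k\<ge>N1. dist (X (2 * k)) a < r" using a r unfolding lim_sequentially by blast
    obtain N2 where N2: "\<forall>k\<ge>N2. dist (X (2 * k + 1)) a < r" using b r ab unfolding lim_sequentially by blast
    have "\<forall>n\<ge>2 * N1 + 2 * N2. dist (X n) a < r"
    proof (intro allI impI)
      fix n assume n: "n \<ge> 2 * N1 + 2 * N2"
      show "dist (X n) a < r"
      proof (cases "even n")
        case True
        then obtain k where k: "n = 2 * k" by blast
        then have "k \<ge> N1" using n by simp
        then show ?thesis using N1 k by simp
      next
        case False
        then obtain k where k: "n = 2 * k + 1" using oddE by blast
        then have "k \<ge> N2" using n by simp
        then show ?thesis using N2 k by simp
      qed
    qed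
    then show "\<exists>no. \<forall>n\<ge>no. dist (X n) a < r" by blast
  qed
  then show "convergent X" unfolding convergent_def by blast
qed

context cgraph
begin

lemma l1conv_eo: "l1conv F f \<Longrightarrow> l1conv (\<lambda>k. F (2 * k)) f \<and> l1conv (\<lambda>k. F (2 * k + 1)) f"
  unfolding l1conv_def
proof
  assume L: "(\<lambda>k. \<Sum>x\<in>V. \<bar>F k x - f x\<bar>) \<longlonglongrightarrow> 0"
  show "(\<lambda>k. \<Sum>x\<in>V. \<bar>F (2 * k) x - f x\<bar>) \<longlonglongrightarrow> 0"
    using LIMSEQ_linear[OF L, of 2] by (simp add: mult.commute)
  show "(\<lambda>k. \<Sum>x\<in>V. \<bar>F (2 * k + 1) x - f x\<bar>) \<longlonglongrightarrow> 0"
    using LIMSEQ_linear[OF LIMSEQ_Suc[OF L], of 2] by (simp add: mult.commute)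
qed

lemma W_eo:
  assumes "\<And>k. prob (\<mu> k)" "\<And>k. prob (\<nu> k)" "prob a1" "prob a2" "prob b1" "prob b2"
    "l1conv (\<lambda>k. \<mu> (2 * k)) a1" "l1conv (\<lambda>k. \<mu> (2 * k + 1)) a2"
    "l1conv (\<lambda>k. \<nu> (2 * k)) b1" "l1conv (\<lambda>k. \<nu> (2 * k + 1)) b2"
  shows "convergent (\<lambda>k. W (\<mu> k) (\<nu> k)) \<longleftrightarrow> W a1 b1 = W a2 b2"
proof (rule eo_conv)
  show "(\<lambda>k. W (\<mu> (2 * k)) (\<nu> (2 * k))) \<longlonglongrightarrow> W a1 b1"
    by (rule W_tendsto) (use assms in auto)
  show "(\<lambda>k. W (\<mu> (2 * k + 1)) (\<nu> (2 * k + 1))) \<longlonglongrightarrow> W a2 b2"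
    by (rule W_tendsto) (use assms in auto)
qed

lemma l1conv_const: "l1conv (\<lambda>k. f) f"
  unfolding l1conv_def by simp

end

context cgraph2
begin

lemma prob_dlt: "w \<in> V \<Longrightarrow> prob (dlt w)"
  unfolding prob_def dlt_def using fin by auto

lemma prob_wd: "w \<in> V \<Longrightarrow> prob (wd (dlt w) k)"
  unfolding prob_def using wd_nn[OF dlt_nn] wd_sum prob_dlt[unfolded prob_def] by auto

lemma g1_conv: assumes "g = 1" "w \<in> V" shows "l1conv (\<lambda>k. wd (dlt w) k) (dlt w)"
proof -
  have P1: "s \<in> V \<Longrightarrow> P s t = (if s = t then 1 else 0)" for s t
    using assms(1) P_split by auto
  have "t \<in> V \<Longrightarrow> wd f k t = f t" for f k t
  proof (induction k arbitrary: t)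
    case (Suc k)
    have "wd f (Suc k) t = (\<Sum>s\<in>V. wd f k s * (if s = t then 1 else 0))"
      unfolding wd_Suc step_def using P1 by (intro sum.cong) auto
    also have "\<dots> = wd f k t" using Suc.prems fin by (simp add: if_distrib cong: if_cong)
    finally show ?case using Suc by simp
  qed simp
  then show ?thesis unfolding l1conv_def by simp
qed

lemma prob_qc: "g = 0 \<Longrightarrow> \<forall>x\<in>V. \<forall>y\<in>V. E x y \<longrightarrow> c x \<noteq> c y \<Longrightarrow> prob (qc c b)"
  unfolding prob_def using qc_sum pi_prob unfolding prob_def qc_def by auto

end

lemma W_half:
  assumes "cgraph2 V E 0" "\<forall>x\<in>V. \<forall>y\<in>V. E x y \<longrightarrow> c x \<noteq> c y"
  shows "wasserstein V E (cgraph.qc V E c b) (cgraph.pi V E) = wasserstein V E (cgraph.qc V E c (\<not> b)) (cgraph.pi V E)"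
proof -
  interpret cgraph2 V E 0 by (rule assms(1))
  define h where "h = (\<lambda>b x. qc c b x / 2)"
  have hnn: "\<forall>x\<in>V. h b' x \<ge> 0" for b' unfolding h_def qc_def pi_def using Dg_pos by auto
  have hs: "sum (h b') V = 1 / 2" for b' unfolding h_def using qc_sum[OF refl assms(2)]
    by (simp add: sum_divide_distrib[symmetric])
  have pi_h: "pi x = h b' x + h (\<not> b') x" for b' x unfolding h_def qc_def by auto
  have e: "W (qc c b') pi = W (h b') (h (\<not> b'))" for b'
  proof -
    have "W (qc c b') pi = W (\<lambda>y. h b' y + h b' y) (\<lambda>y. h (\<not> b') y + h b' y)"
      using pi_h by (intro W_cong) (auto simp: h_def algebra_simps)
    also have "\<dots> = W (h b') (h (\<not> b'))" by (rule W_cancel[OF hnn hnn hnn]) (simp add: hs)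
    finally show ?thesis .
  qed
  show ?thesis using e[of b] e[of "\<not> b"] W_sym by simp
qed



theorem theorem3p10:
  fixes V :: "'a set" and E :: "'a \<Rightarrow> 'a \<Rightarrow> bool" and u v :: 'a and \<alpha> \<beta> :: real
  assumes "connected_graph V E"
    and "u \<in> V" and "v \<in> V"
    and "0 \<le> \<alpha>" and "\<alpha> \<le> \<beta>" and "\<beta> \<le> 1"
  shows "\<not> convergent (\<lambda>k. wasserstein V E (walk_dist V E \<alpha> u k) (walk_dist V E \<beta> v k))
    \<longleftrightarrow> bipartite V E \<and> \<alpha> = 0 \<and> \<beta> = 1 \<and>
        (\<Sum>w\<in>V. (-1) ^ gdist E v w * real (gdist E v w) * real (deg V E w)) \<noteq> 0"
proof -
  interpret cgraph V E using assms(1) by unfold_locales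
  define S where "S = (\<Sum>w\<in>V. (-1) ^ gdist E v w * real (gdist E v w) * real (deg V E w) :: real)"
  define Wk where "Wk = (\<lambda>k. wasserstein V E (walk_dist V E \<alpha> u k) (walk_dist V E \<beta> v k))"
  have goal: "\<not> convergent Wk \<longleftrightarrow> bipartite V E \<and> \<alpha> = 0 \<and> \<beta> = 1 \<and> S \<noteq> 0"
  proof (cases "card V \<ge> 2")
    case False
    then have "card V \<le> Suc 0" by simp
    then have V1: "\<forall>a\<in>V. \<forall>b\<in>V. a = b" using card_le_Suc0_iff_eq[OF fin] by blast
    then have Vu: "V = {u}" and vu: "v = u" using assms(2,3) by auto
    have deg0: "deg {u} E u = 0" unfolding deg_def using Eirr by simp
    have wk: "walk_dist V E \<gamma> u k = (\<lambda>t. if t = u then 1 else 0)" for \<gamma> k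
      by (induction k) (auto simp: Vu trans_prob_def deg0)
    have "Wk = (\<lambda>k. wasserstein V E (\<lambda>t. if t = u then 1 else 0) (\<lambda>t. if t = u then 1 else 0))"
      unfolding Wk_def wk vu ..
    then have "convergent Wk" by (simp add: convergent_const)
    moreover have "S = 0" unfolding S_def Vu vu by simp
    ultimately show ?thesis by simp
  next
    case True
    interpret A: cgraph2 V E \<alpha> using True assms by unfold_locales auto
    interpret B: cgraph2 V E \<beta> using True assms by unfold_locales auto
    have mu: "walk_dist V E \<alpha> u = A.wd (A.dlt u)" by (rule ext) (rule A.walk_dist_wd)
    have nu: "walk_dist V E \<beta> v = B.wd (B.dlt v)" by (rule ext) (rule B.walk_dist_wd)
    have pm: "\<And>k. prob (walk_dist V E \<alpha> u k)" unfolding mu using A.prob_wd assms(2) by blast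
    have pn: "\<And>k. prob (walk_dist V E \<beta> v k)" unfolding nu using B.prob_wd assms(3) by blast
    have Wk_eo: "convergent Wk \<longleftrightarrow> W a1 b1 = W a2 b2"
      if "prob a1" "prob a2" "prob b1" "prob b2"
        "l1conv (\<lambda>k. walk_dist V E \<alpha> u (2 * k)) a1" "l1conv (\<lambda>k. walk_dist V E \<alpha> u (2 * k + 1)) a2"
        "l1conv (\<lambda>k. walk_dist V E \<beta> v (2 * k)) b1" "l1conv (\<lambda>k. walk_dist V E \<beta> v (2 * k + 1)) b2"
      for a1 a2 b1 b2
      unfolding Wk_def by (rule W_eo[OF pm pn that])
    have nu_lim: "\<exists>\<nu>0. prob \<nu>0 \<and> l1conv (walk_dist V E \<beta> v) \<nu>0"
      if "\<beta> = 1 \<or> (\<beta> < 1 \<and> (\<beta> > 0 \<or> \<not> bipartite V E))"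
    proof (cases "\<beta> = 1")
      case True
      then show ?thesis unfolding nu using B.g1_conv[OF True assms(3)] B.prob_dlt[OF assms(3)] by auto
    next
      case False
      then have "\<beta> < 1" "\<beta> > 0 \<or> \<not> bipartite V E" using that by auto
      then have "l1conv (walk_dist V E \<beta> v) pi"
        unfolding nu using B.conv_lazy B.conv_nonbip assms(3) by (metis B.g0 order_neq_le_trans)
      then show ?thesis using B.pi_prob by blast
    qed
    show ?thesis
    proof (cases "\<alpha> = 1")
      case a1: True
      then have b1: "\<beta> = 1" using assms by simp
      obtain \<nu>0 where n0: "prob \<nu>0" "l1conv (walk_dist V E \<beta> v) \<nu>0" using nu_lim b1 by blast
      have "l1conv (walk_dist V E \<alpha> u) (A.dlt u)" unfolding mu using A.g1_conv[OF a1 assms(2)] by simp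
      then have "convergent Wk" using Wk_eo[OF A.prob_dlt[OF assms(2)] A.prob_dlt[OF assms(2)] n0(1) n0(1)]
          l1conv_eo n0(2) by blast
      then show ?thesis using a1 by simp
    next
      case an1: False
      show ?thesis
      proof (cases "\<alpha> > 0 \<or> \<not> bipartite V E")
        case True
        have "l1conv (walk_dist V E \<alpha> u) pi"
          unfolding mu using A.conv_lazy A.conv_nonbip assms(2) True an1 assms(4,5,6)
          by (metis order_neq_le_trans order.trans order_le_less)
        moreover have "\<beta> = 1 \<or> (\<beta> < 1 \<and> (\<beta> > 0 \<or> \<not> bipartite V E))" using True assms by auto
        then obtain \<nu>0 where n0: "prob \<nu>0" "l1conv (walk_dist V E \<beta> v) \<nu>0" using nu_lim by blast
        ultimately have "convergent Wk" using Wk_eo[OF A.pi_prob A.pi_prob n0(1) n0(1)] l1conv_eo n0(2) by blast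
        then show ?thesis using True assms(4) by auto
      next
        case False
        then have a0: "\<alpha> = 0" and bip: "bipartite V E" using assms(4) by auto
        obtain c :: "'a \<Rightarrow> bool" where c: "\<forall>x\<in>V. \<forall>y\<in>V. E x y \<longrightarrow> c x \<noteq> c y" using bip unfolding bipartite_def by blast
        have mu_e: "l1conv (\<lambda>k. walk_dist V E \<alpha> u (2 * k)) (qc c (c u))"
          and mu_o: "l1conv (\<lambda>k. walk_dist V E \<alpha> u (2 * k + 1)) (qc c (\<not> c u))"
          unfolding mu using A.conv_bip[OF a0 c assms(2)] by auto
        have pq: "prob (qc c b)" for b using A.prob_qc[OF a0 c] .
        show ?thesis
        proof (cases "\<beta> = 1")
          case b1: True
          have nl: "l1conv (walk_dist V E \<beta> v) (B.dlt v)" unfolding nu using B.g1_conv[OF b1 assms(3)] by simp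
          have conv: "convergent Wk \<longleftrightarrow> W (qc c (c u)) (B.dlt v) = W (qc c (\<not> c u)) (B.dlt v)"
            using Wk_eo[OF pq pq B.prob_dlt[OF assms(3)] B.prob_dlt[OF assms(3)] mu_e mu_o] l1conv_eo[OF nl]
            by blast
          have Wd: "W (qc c b) (B.dlt v) = (\<Sum>x\<in>V. qc c b x * real (d x v))" for b
            using W_delta[of "qc c b" v] pq[of b] assms(3) unfolding prob_def B.dlt_def by auto
          have par: "c v = c x \<longleftrightarrow> even (d v x)" if "x \<in> V" for x
            using parity_d[OF c assms(3) that] .
          have diff: "W (qc c (c u)) (B.dlt v) - W (qc c (\<not> c u)) (B.dlt v)
              = (if c u = c v then 1 else -1) * (2 / Dg) * S"
          proof -
            have "W (qc c (c u)) (B.dlt v) - W (qc c (\<not> c u)) (B.dlt v)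
               = (\<Sum>x\<in>V. qc c (c u) x * real (d x v) - qc c (\<not> c u) x * real (d x v))"
              unfolding Wd by (simp add: sum_subtractf)
            also have "\<dots> = (\<Sum>x\<in>V. (if c u = c v then 1 else -1) * (2 / Dg) *
                 ((-1) ^ d v x * real (d v x) * real (deg V E x)))"
            proof (intro sum.cong refl)
              fix x assume x: "x \<in> V"
              show "qc c (c u) x * real (d x v) - qc c (\<not> c u) x * real (d x v) =
                 (if c u = c v then 1 else -1) * (2 / Dg) * ((-1) ^ d v x * real (d v x) * real (deg V E x))"
                using par[OF x] d_sym[OF x assms(3)]
                by (cases "even (d v x)") (auto simp: qc_def pi_def)
            qed
            also have "\<dots> = (if c u = c v then 1 else -1) * (2 / Dg) * S"
              unfolding S_def by (simp add: sum_distrib_left)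
            finally show ?thesis .
          qed
          have "convergent Wk \<longleftrightarrow> S = 0" using conv diff A.Dg_pos by (auto split: if_splits)
          then show ?thesis using a0 b1 bip by simp
        next
          case bn1: False
          have "convergent Wk"
          proof (cases "\<beta> = 0")
            case b0: True
            have nu_e: "l1conv (\<lambda>k. walk_dist V E \<beta> v (2 * k)) (qc c (c v))"
              and nu_o: "l1conv (\<lambda>k. walk_dist V E \<beta> v (2 * k + 1)) (qc c (\<not> c v))"
              unfolding nu using B.conv_bip[OF b0 c assms(3)] by auto
            have "W (qc c (c u)) (qc c (c v)) = W (qc c (\<not> c u)) (qc c (\<not> c v))"
            proof (cases "c u = c v")
              case True
              then show ?thesis using W_self pq unfolding prob_def by simp
            next
              case False
              then have "c v = (\<not> c u)" by auto
              then show ?thesis using W_sym by simp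
            qed
            then show ?thesis using Wk_eo[OF pq pq pq pq mu_e mu_o nu_e nu_o] by blast
          next
            case False
            then have "\<beta> < 1 \<and> \<beta> > 0" using bn1 assms by auto
            then have nl: "l1conv (walk_dist V E \<beta> v) pi" unfolding nu using B.conv_lazy assms(3) by blast
            have "W (qc c (c u)) pi = W (qc c (\<not> c u)) pi"
              using W_half[of V E c "c u"] A.cgraph2_axioms a0 c by simp
            then show ?thesis using Wk_eo[OF pq pq A.pi_prob A.pi_prob mu_e mu_o] l1conv_eo[OF nl] by blast
          qed
          then show ?thesis using bn1 by simp
        qed
      qed
    qed
  qed
  then show ?thesis unfolding Wk_def S_def .
qed


end
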